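(* Under Assumptions A1–A3, $$\tau_{10}=\frac{\mathbb{E}(\phi_{1,10}-\phi_{0,10})}{\mathbb{E}(\psi_{S_1}-\psi_{S_0})},\qquad \tau_{00}=\frac{\mathbb{E}(\phi_{1,00}-\phi_{0,00})}{\mathbb{E}(1-\psi_{S_1})},\qquad \tau_{11}=\frac{\mathbb{E}(\phi_{1,11}-\phi_{0,11})}{\mathbb{E}(\psi_{S_0})}.$$
   Context: Setup: binary treatment $Z$, binary intermediate $S$, outcome $Y$, covariates $X$; potential values $S_z,Y_z$ with $S=ZS_1+(1-Z)S_0$, $Y=ZY_1+(1-Z)Y_0$; i.i.d. units. $U=(S_1,S_0)$ written $s_1s_0$; $\tau_u=\mathbb{E}(Y_1-Y_0\mid U=u)$. $\pi(X)=\mathbb{P}(Z=1\mid X)$, $e_u(X)=\mathbb{P}(U=u\mid X)$, $p_z(X)=\mathbb{P}(S=1\mid Z=z,X)$, $\mu_{zs}(X)=\mathbb{E}(Y\mid Z=z,S=s,X)$. A1: $Z\perp\!\!\!\perp(S_0,S_1,Y_0,Y_1)\mid X$; A2: $S_1\ge S_0$; A3: $\mathbb{E}(Y_1\mid U=11,X)=\mathbb{E}(Y_1\mid U=10,X)$, $\mathbb{E}(Y_0\mid U=00,X)=\mathbb{E}(Y_0\mid U=10,X)$. Under A1–A2, $e_{10}(X)=p_1(X)-p_0(X)$, $e_{00}(X)=1-p_1(X)$, $e_{11}(X)=p_0(X)$. For $f(Y,S,X)$, $\psi_{f(Y_z,S_z,X)}=[f(Y,S,X)-\mathbb{E}\{f\mid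 X,Z=z\}]\mathbf{1}(Z=z)/\mathbb{P}(Z=z\mid X)+\mathbb{E}\{f\mid X,Z=z\}$. Define $\phi_{1,10}=\frac{e_{10}(X)}{p_1(X)}\psi_{Y_1S_1}-\mu_{11}(X)\{\psi_{S_0}-\frac{p_0(X)}{p_1(X)}\psi_{S_1}\}$, $\phi_{0,10}=\frac{e_{10}(X)}{1-p_0(X)}\psi_{Y_0(1-S_0)}-\mu_{00}(X)\{\psi_{1-S_1}-\frac{1-p_1(X)}{1-p_0(X)}\psi_{1-S_0}\}$, $\phi_{1,00}=\psi_{Y_1(1-S_1)}$, $\phi_{0,00}=\frac{e_{00}(X)}{1-p_0(X)}\psi_{Y_0(1-S_0)}+\mu_{00}(X)\{\psi_{1-S_1}-\frac{1-p_1(X)}{1-p_0(X)}\psi_{1-S_0}\}$, $\phi_{1,11}=\frac{e_{11}(X)}{p_1(X)}\psi_{Y_1S_1}+\mu_{11}(X)\{\psi_{S_0}-\frac{p_0(X)}{p_1(X)}\psi_{S_1}\}$, $\phi_{0,11}=\psi_{Y_0S_0}$. *)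

theory Defs
  imports "HOL-Probability.Probability"
begin

text \<open>M is the probability space of a generic unit,
 X :: 'w => 'x the covariates (with measurable space MX), Z the binary
 treatment, S1 S0 the binary potential intermediates, Y1 Y0 the potential
 outcomes.  Binary quantities are bool-valued; of_bool gives the 0/1 value.\<close>

definition obsS :: "('w \<Rightarrow> bool) \<Rightarrow> ('w \<Rightarrow> bool) \<Rightarrow> ('w \<Rightarrow> bool) \<Rightarrow> 'w \<Rightarrow> bool" where
  "obsS Z S1 S0 = (\<lambda>w. if Z w then S1 w else S0 w)"

definition obsY :: "('w \<Rightarrow> bool) \<Rightarrow> ('w \<Rightarrow> real) \<Rightarrow> ('w \<Rightarrow> real) \<Rightarrow> 'w \<Rightarrow> real" where
  "obsY Z Y1 Y0 = (\<lambda>w. if Z w then Y1 w else Y0 w)"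

definition cE :: "'w measure \<Rightarrow> ('w \<Rightarrow> 'x) \<Rightarrow> 'x measure \<Rightarrow> ('w \<Rightarrow> real) \<Rightarrow> 'w \<Rightarrow> real" where
  "cE M X MX f = real_cond_exp M (vimage_algebra (space M) X MX) f"

definition cEev :: "'w measure \<Rightarrow> ('w \<Rightarrow> 'x) \<Rightarrow> 'x measure \<Rightarrow> ('w \<Rightarrow> bool) \<Rightarrow> ('w \<Rightarrow> real) \<Rightarrow> 'w \<Rightarrow> real" where
  "cEev M X MX A f = (\<lambda>w. cE M X MX (\<lambda>v. f v * of_bool (A v)) w / cE M X MX (\<lambda>v. of_bool (A v)) w)"

definition cond_indep :: "'w measure \<Rightarrow> ('w \<Rightarrow> 'x) \<Rightarrow> 'x measure \<Rightarrow> ('w \<Rightarrow> 'z) \<Rightarrow> ('w \<Rightarrow> 'v) \<Rightarrow> 'v measure \<Rightarrow> bool" where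
  "cond_indep M X MX Z W MW \<longleftrightarrow>
     (\<forall>A B. B \<in> sets MW \<longrightarrow>
        (AE w in M. cE M X MX (\<lambda>v. of_bool (Z v \<in> A \<and> W v \<in> B)) w
                   = cE M X MX (\<lambda>v. of_bool (Z v \<in> A)) w * cE M X MX (\<lambda>v. of_bool (W v \<in> B)) w))"

definition PZ :: "'w measure \<Rightarrow> ('w \<Rightarrow> 'x) \<Rightarrow> 'x measure \<Rightarrow> ('w \<Rightarrow> bool) \<Rightarrow> bool \<Rightarrow> 'w \<Rightarrow> real" where
  "PZ M X MX Z z = cE M X MX (\<lambda>v. of_bool (Z v = z))"

definition eU :: "'w measure \<Rightarrow> ('w \<Rightarrow> 'x) \<Rightarrow> 'x measure \<Rightarrow> ('w \<Rightarrow> bool) \<Rightarrow> ('w \<Rightarrow> bool) \<Rightarrow> bool \<times> bool \<Rightarrow> 'w \<Rightarrow> real" where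
  "eU M X MX S1 S0 u = cE M X MX (\<lambda>v. of_bool ((S1 v, S0 v) = u))"

definition pz :: "'w measure \<Rightarrow> ('w \<Rightarrow> 'x) \<Rightarrow> 'x measure \<Rightarrow> ('w \<Rightarrow> bool) \<Rightarrow> ('w \<Rightarrow> bool) \<Rightarrow> ('w \<Rightarrow> bool) \<Rightarrow> bool \<Rightarrow> 'w \<Rightarrow> real" where
  "pz M X MX Z S1 S0 z = cEev M X MX (\<lambda>v. Z v = z) (\<lambda>v. of_bool (obsS Z S1 S0 v))"

definition muzs :: "'w measure \<Rightarrow> ('w \<Rightarrow> 'x) \<Rightarrow> 'x measure \<Rightarrow> ('w \<Rightarrow> bool) \<Rightarrow> ('w \<Rightarrow> bool) \<Rightarrow> ('w \<Rightarrow> bool)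
     \<Rightarrow> ('w \<Rightarrow> real) \<Rightarrow> ('w \<Rightarrow> real) \<Rightarrow> bool \<Rightarrow> bool \<Rightarrow> 'w \<Rightarrow> real" where
  "muzs M X MX Z S1 S0 Y1 Y0 z s =
     cEev M X MX (\<lambda>v. Z v = z \<and> obsS Z S1 S0 v = s) (obsY Z Y1 Y0)"

text \<open>psi_{f(Y_z,S_z,X)}, where f is given as the observed-data function w |-> f(Y w, S w, X w):
 [f - E(f | X, Z=z)] 1(Z=z) / P(Z=z | X) + E(f | X, Z=z).\<close>
definition psi :: "'w measure \<Rightarrow> ('w \<Rightarrow> 'x) \<Rightarrow> 'x measure \<Rightarrow> ('w \<Rightarrow> bool) \<Rightarrow> bool \<Rightarrow> ('w \<Rightarrow> real) \<Rightarrow> 'w \<Rightarrow> real" where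
  "psi M X MX Z z f = (\<lambda>w. (f w - cEev M X MX (\<lambda>v. Z v = z) f w) * of_bool (Z w = z) / PZ M X MX Z z w
                          + cEev M X MX (\<lambda>v. Z v = z) f w)"

definition fYS where "fYS Z S1 S0 Y1 Y0 = (\<lambda>w. obsY Z Y1 Y0 w * of_bool (obsS Z S1 S0 w))"
definition fY1mS where "fY1mS Z S1 S0 Y1 Y0 = (\<lambda>w. obsY Z Y1 Y0 w * (1 - of_bool (obsS Z S1 S0 w)))"
definition fS :: "('w \<Rightarrow> bool) \<Rightarrow> ('w \<Rightarrow> bool) \<Rightarrow> ('w \<Rightarrow> bool) \<Rightarrow> 'w \<Rightarrow> real"
  where "fS Z S1 S0 = (\<lambda>w. of_bool (obsS Z S1 S0 w))"
definition f1mS :: "('w \<Rightarrow> bool) \<Rightarrow> ('w \<Rightarrow> bool) \<Rightarrow> ('w \<Rightarrow> bool) \<Rightarrow> 'w \<Rightarrow> real"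
  where "f1mS Z S1 S0 = (\<lambda>w. 1 - of_bool (obsS Z S1 S0 w))"

definition phi_1_10 where "phi_1_10 M X MX Z S1 S0 Y1 Y0 = (\<lambda>w.
    eU M X MX S1 S0 (True, False) w / pz M X MX Z S1 S0 True w * psi M X MX Z True (fYS Z S1 S0 Y1 Y0) w
  - muzs M X MX Z S1 S0 Y1 Y0 True True w *
      (psi M X MX Z False (fS Z S1 S0) w
        - pz M X MX Z S1 S0 False w / pz M X MX Z S1 S0 True w * psi M X MX Z True (fS Z S1 S0) w))"

definition phi_0_10 where "phi_0_10 M X MX Z S1 S0 Y1 Y0 = (\<lambda>w.
    eU M X MX S1 S0 (True, False) w / (1 - pz M X MX Z S1 S0 False w) * psi M X MX Z False (fY1mS Z S1 S0 Y1 Y0) w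
  - muzs M X MX Z S1 S0 Y1 Y0 False False w *
      (psi M X MX Z True (f1mS Z S1 S0) w
        - (1 - pz M X MX Z S1 S0 True w) / (1 - pz M X MX Z S1 S0 False w) * psi M X MX Z False (f1mS Z S1 S0) w))"

definition phi_1_00 where "phi_1_00 M X MX Z S1 S0 Y1 Y0 = psi M X MX Z True (fY1mS Z S1 S0 Y1 Y0)"

definition phi_0_00 where "phi_0_00 M X MX Z S1 S0 Y1 Y0 = (\<lambda>w.
    eU M X MX S1 S0 (False, False) w / (1 - pz M X MX Z S1 S0 False w) * psi M X MX Z False (fY1mS Z S1 S0 Y1 Y0) w
  + muzs M X MX Z S1 S0 Y1 Y0 False False w *
      (psi M X MX Z True (f1mS Z S1 S0) w
        - (1 - pz M X MX Z S1 S0 True w) / (1 - pz M X MX Z S1 S0 False w) * psi M X MX Z False (f1mS Z S1 S0) w))"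

definition phi_1_11 where "phi_1_11 M X MX Z S1 S0 Y1 Y0 = (\<lambda>w.
    eU M X MX S1 S0 (True, True) w / pz M X MX Z S1 S0 True w * psi M X MX Z True (fYS Z S1 S0 Y1 Y0) w
  + muzs M X MX Z S1 S0 Y1 Y0 True True w *
      (psi M X MX Z False (fS Z S1 S0) w
        - pz M X MX Z S1 S0 False w / pz M X MX Z S1 S0 True w * psi M X MX Z True (fS Z S1 S0) w))"

definition phi_0_11 where "phi_0_11 M X MX Z S1 S0 Y1 Y0 = psi M X MX Z False (fYS Z S1 S0 Y1 Y0)"

definition tau :: "'w measure \<Rightarrow> ('w \<Rightarrow> bool) \<Rightarrow> ('w \<Rightarrow> bool) \<Rightarrow> ('w \<Rightarrow> real) \<Rightarrow> ('w \<Rightarrow> real) \<Rightarrow> bool \<times> bool \<Rightarrow> real" where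
  "tau M S1 S0 Y1 Y0 u =
     (\<integral>w. (Y1 w - Y0 w) * of_bool ((S1 w, S0 w) = u) \<partial>M) / measure M {w \<in> space M. (S1 w, S0 w) = u}"

end

theory Submission
  imports Defs
begin


locale ce_setup =
  fixes M :: "'w measure" and X :: "'w \<Rightarrow> 'x" and MX :: "'x measure"
  assumes prob: "prob_space M" and Xm: "X \<in> M \<rightarrow>\<^sub>M MX"

lemma (in ce_setup) sfs: "sigma_finite_subalgebra M (vimage_algebra (space M) X MX)"
proof -
  have "subalgebra M (vimage_algebra (space M) X MX)"
    unfolding subalgebra_def
  proof
    show "space (vimage_algebra (space M) X MX) = space M" by simp
    have "X \<in> space M \<rightarrow> space MX" using measurable_space[OF Xm] by (intro Pi_I)
    then have "sets (vimage_algebra (space M) X MX) = {X -` A \<inter> space M | A. A \<in> sets MX}"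
      by (rule sets_vimage_algebra2)
    then show "sets (vimage_algebra (space M) X MX) \<subseteq> sets M"
      using measurable_sets[OF Xm] by auto
  qed
  moreover interpret prob_space M by (rule prob)
  have "finite_measure_subalgebra M (vimage_algebra (space M) X MX)"
    by (simp add: calculation finite_measure_axioms finite_measure_subalgebra.intro finite_measure_subalgebra_axioms.intro)
  then show ?thesis using finite_measure_subalgebra_is_sigma_finite by blast
qed

sublocale ce_setup \<subseteq> sigma_finite_subalgebra M "vimage_algebra (space M) X MX"
  by (rule sfs)
sublocale ce_setup \<subseteq> prob_space M
  by (rule prob)

context ce_setup begin
abbreviation "F \<equiv> vimage_algebra (space M) X MX"

lemma cE_meas[measurable]: "cE M X MX f \<in> borel_measurable F" "cE M X MX f \<in> borel_measurable M"
  unfolding cE_def by auto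

lemma F_to_M: "f \<in> borel_measurable F \<Longrightarrow> f \<in> borel_measurable M"
  by (rule measurable_from_subalg[OF subalg])

lemma T: assumes "integrable M (\<lambda>x. f x * g x)" "f \<in> borel_measurable F" "g \<in> borel_measurable M"
  shows "integrable M (\<lambda>x. f x * cE M X MX g x)" "(\<integral>x. f x * cE M X MX g x \<partial>M) = (\<integral>x. f x * g x \<partial>M)"
  using real_cond_exp_intg[OF assms] unfolding cE_def by auto

lemma L_int:
  assumes cm: "c \<in> borel_measurable F" and c0: "\<And>x. c x \<ge> 0"
    and gm: "integrable M g" and g0: "\<And>x. g x \<ge> 0"
    and ci: "integrable M (\<lambda>x. c x * cE M X MX g x)"
  shows "integrable M (\<lambda>x. c x * g x)"
proof -
  have cM[measurable]: "c \<in> borel_measurable M" using F_to_M cm by blast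
  have gM[measurable]: "g \<in> borel_measurable M" using gm by auto
  define cn where "cn n x = min (c x) (real n)" for n x
  have cnF: "cn n \<in> borel_measurable F" for n unfolding cn_def using cm by measurable
  have cnM[measurable]: "cn n \<in> borel_measurable M" for n using F_to_M cnF by blast
  have cn0: "cn n x \<ge> 0" for n x using c0 by (simp add: cn_def)
  have int_n: "integrable M (\<lambda>x. cn n x * g x)" for n
  proof (rule Bochner_Integration.integrable_bound[where f="\<lambda>x. real n * g x"])
    show "integrable M (\<lambda>x. real n * g x)" using gm by simp
    show "(\<lambda>x. cn n x * g x) \<in> borel_measurable M" by measurable
    show "AE x in M. norm (cn n x * g x) \<le> norm (real n * g x)"
    proof (rule AE_I2)
      fix x
      have "cn n x * g x \<le> real n * g x" unfolding cn_def by (rule mult_right_mono) (auto simp: g0)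
      then show "norm (cn n x * g x) \<le> norm (real n * g x)" using cn0[of n x] g0[of x] by simp
    qed
  qed
  have Cg0: "AE x in M. cE M X MX g x \<ge> 0"
    unfolding cE_def by (rule real_cond_exp_pos) (auto simp: g0)
  have bnd: "(\<integral>x. cn n x * g x \<partial>M) \<le> (\<integral>x. c x * cE M X MX g x \<partial>M)" for n
  proof -
    have "(\<integral>x. cn n x * g x \<partial>M) = (\<integral>x. cn n x * cE M X MX g x \<partial>M)"
      using T(2)[OF int_n cnF gM] by simp
    also have "\<dots> \<le> (\<integral>x. c x * cE M X MX g x \<partial>M)"
      apply (rule integral_mono_AE[OF T(1)[OF int_n cnF gM] ci])
      using Cg0 by eventually_elim (auto simp: cn_def intro!: mult_right_mono)
    finally show ?thesis .
  qed
  have "(\<integral>\<^sup>+x. ennreal (c x * g x) \<partial>M) = (\<integral>\<^sup>+x. (SUP n. ennreal (cn n x * g x)) \<partial>M)"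
  proof (rule nn_integral_cong)
    fix x
    have "(\<lambda>n. cn n x * g x) \<longlonglongrightarrow> c x * g x"
    proof (rule tendsto_mult_right)
      show "(\<lambda>n. cn n x) \<longlonglongrightarrow> c x"
      proof (rule tendsto_eventually)
        obtain N :: nat where "c x \<le> N" using real_arch_simple by blast
        then show "eventually (\<lambda>n. cn n x = c x) sequentially"
          unfolding cn_def eventually_sequentially
        proof (intro exI allI impI)
          fix n assume "N \<le> n"
          then have "real N \<le> real n" by simp
          with \<open>c x \<le> N\<close> show "min (c x) (real n) = c x" by simp
        qed
      qed
    qed
    moreover have "incseq (\<lambda>n. cn n x * g x)"
      by (auto simp: incseq_def cn_def g0 intro!: mult_right_mono)
    ultimately have L: "(\<lambda>n. ennreal (cn n x * g x)) \<longlonglongrightarrow> ennreal (c x * g x)"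
      and I: "incseq (\<lambda>n. ennreal (cn n x * g x))"
      by (auto intro!: tendsto_ennrealI simp: incseq_def ennreal_leI)
    show "ennreal (c x * g x) = (SUP n. ennreal (cn n x * g x))"
      using LIMSEQ_unique[OF L LIMSEQ_SUP[OF I]] .
  qed
  also have "\<dots> = (SUP n. \<integral>\<^sup>+x. ennreal (cn n x * g x) \<partial>M)"
  proof (rule nn_integral_monotone_convergence_SUP[where f="\<lambda>n x. ennreal (cn n x * g x)"])
    show "incseq (\<lambda>n x. ennreal (cn n x * g x))"
      by (auto simp: incseq_def le_fun_def cn_def g0 intro!: mult_right_mono ennreal_leI)
  qed simp
  also have "\<dots> \<le> ennreal (\<integral>x. c x * cE M X MX g x \<partial>M)"
  proof (rule SUP_least)
    fix n
    have "(\<integral>\<^sup>+x. ennreal (cn n x * g x) \<partial>M) = ennreal (\<integral>x. cn n x * g x \<partial>M)"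
      by (rule nn_integral_eq_integral[OF int_n]) (auto simp: cn0 g0)
    then show "(\<integral>\<^sup>+x. ennreal (cn n x * g x) \<partial>M) \<le> ennreal (\<integral>x. c x * cE M X MX g x \<partial>M)"
      using bnd[of n] by (simp add: ennreal_leI)
  qed
  finally have "(\<integral>\<^sup>+x. ennreal (c x * g x) \<partial>M) < \<infinity>"
    using le_less_trans by fastforce
  then show ?thesis
    by (intro integrableI_nonneg) (auto simp: c0 g0)
qed

lemma dens_eq:
  fixes d1 d2 :: "'w \<Rightarrow> real"
  assumes d1m[measurable]: "d1 \<in> borel_measurable M" and d2m[measurable]: "d2 \<in> borel_measurable M"
    and d1i: "integrable M d1" and d2i: "integrable M d2"
    and d10: "AE x in M. 0 \<le> d1 x" and d20: "AE x in M. 0 \<le> d2 x"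
    and Vm[measurable]: "V \<in> M \<rightarrow>\<^sub>M MW"
    and eq: "\<And>B. B \<in> sets MW \<Longrightarrow> (\<integral>x. d1 x * indicator (V -` B \<inter> space M) x \<partial>M) = (\<integral>x. d2 x * indicator (V -` B \<inter> space M) x \<partial>M)"
    and gm[measurable]: "g \<in> borel_measurable MW"
  shows "(\<integral>x. d1 x * g (V x) \<partial>M) = (\<integral>x. d2 x * g (V x) \<partial>M)"
proof -
  have em: "emeasure (density M d) (V -` B \<inter> space M) = ennreal (\<integral>x. d x * indicator (V -` B \<inter> space M) x \<partial>M)"
    if [measurable]: "d \<in> borel_measurable M" and di: "integrable M d" and d0: "AE x in M. 0 \<le> d x" and B: "B \<in> sets MW" for d B
  proof -
    have S[measurable]: "V -` B \<inter> space M \<in> sets M" using B by measurable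
    have "emeasure (density M d) (V -` B \<inter> space M) = (\<integral>\<^sup>+x. ennreal (d x) * indicator (V -` B \<inter> space M) x \<partial>M)"
      by (rule emeasure_density) auto
    also have "\<dots> = (\<integral>\<^sup>+x. ennreal (d x * indicator (V -` B \<inter> space M) x) \<partial>M)"
      by (rule nn_integral_cong) (auto simp: indicator_def)
    also have "\<dots> = ennreal (\<integral>x. d x * indicator (V -` B \<inter> space M) x \<partial>M)"
    proof (rule nn_integral_eq_integral)
      show "integrable M (\<lambda>x. d x * indicator (V -` B \<inter> space M) x)"
        using integrable_mult_indicator[OF S di] by (simp add: mult.commute)
      show "AE x in M. 0 \<le> d x * indicator (V -` B \<inter> space M) x"
        using d0 by eventually_elim (auto simp: indicator_def)
    qed
    finally show ?thesis .
  qed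
  have "distr (density M d1) MW V = distr (density M d2) MW V"
  proof (rule measure_eqI)
    show "sets (distr (density M d1) MW V) = sets (distr (density M d2) MW V)" by simp
    fix B assume "B \<in> sets (distr (density M d1) MW V)"
    then have B: "B \<in> sets MW" by simp
    have V1: "V \<in> density M d1 \<rightarrow>\<^sub>M MW" and V2: "V \<in> density M d2 \<rightarrow>\<^sub>M MW" by auto
    show "emeasure (distr (density M d1) MW V) B = emeasure (distr (density M d2) MW V) B"
      using emeasure_distr[OF V1 B] emeasure_distr[OF V2 B] em[OF d1m d1i d10 B] em[OF d2m d2i d20 B] eq[OF B]
      by simp
  qed
  then have "(\<integral>y. g y \<partial>distr (density M d1) MW V) = (\<integral>y. g y \<partial>distr (density M d2) MW V)" by simp
  moreover have "(\<integral>y. g y \<partial>distr (density M d) MW V) = (\<integral>x. d x * g (V x) \<partial>M)"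
    if [measurable]: "d \<in> borel_measurable M" and d0: "AE x in M. 0 \<le> d x" for d
  proof -
    have "(\<integral>y. g y \<partial>distr (density M d) MW V) = (\<integral>x. g (V x) \<partial>density M d)"
      by (rule integral_distr) auto
    also have "\<dots> = (\<integral>x. d x *\<^sub>R g (V x) \<partial>M)"
      by (rule integral_density) (auto simp: d0)
    finally show ?thesis by simp
  qed
  ultimately show ?thesis using d10 d20 by simp
qed

lemma Z0:
  assumes hi: "integrable M h" and Am[measurable]: "Measurable.pred M A"
  shows "AE w in M. cE M X MX (\<lambda>v. of_bool (A v)) w = 0 \<longrightarrow> cE M X MX (\<lambda>v. h v * of_bool (A v)) w = 0"
proof -
  have hm[measurable]: "h \<in> borel_measurable M" using hi by auto
  define B where "B = {w \<in> space M. cE M X MX (\<lambda>v. of_bool (A v)) w = 0}"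
  have BF: "B \<in> sets F"
  proof -
    have "cE M X MX (\<lambda>v. of_bool (A v)) -` {0} \<inter> space F \<in> sets F"
      by (rule measurable_sets[OF cE_meas(1)]) auto
    moreover have "B = cE M X MX (\<lambda>v. of_bool (A v)) -` {0} \<inter> space F" unfolding B_def by auto
    ultimately show ?thesis by simp
  qed
  have bF: "indicator B \<in> borel_measurable F" using BF by simp
  have BM[measurable]: "B \<in> sets M" using BF subalg by (auto simp: subalgebra_def)
  have bM[measurable]: "indicator B \<in> borel_measurable M" using F_to_M[OF bF] .
  have ii: "integrable M (\<lambda>x. indicator B x * of_bool (A x) :: real)"
    by (rule Bochner_Integration.integrable_bound[where f="\<lambda>_. 1::real"]) (auto simp: indicator_def)
  have "(\<integral>x. indicator B x * of_bool (A x) \<partial>M) = (\<integral>x. indicator B x * cE M X MX (\<lambda>v. of_bool (A v)) x \<partial>M)"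
    using T(2)[OF ii bF] by simp
  also have "\<dots> = 0"
    by (rule integral_eq_zero_AE) (auto simp: B_def indicator_def)
  finally have "AE x in M. indicator B x * of_bool (A x) = (0::real)"
    using integral_nonneg_eq_0_iff_AE[OF ii] by auto
  then have z: "AE x in M. indicator B x * (h x * of_bool (A x)) = (0::real)"
    by eventually_elim auto
  have i2: "integrable M (\<lambda>x. indicator B x * (h x * of_bool (A x)))"
    by (rule Bochner_Integration.integrable_bound[where f=h]) (auto simp: hi indicator_def)
  have m1: "AE x in M. real_cond_exp M F (\<lambda>x. indicator B x * (h x * of_bool (A x))) x = indicator B x * real_cond_exp M F (\<lambda>x. h x * of_bool (A x)) x"
    by (rule real_cond_exp_mult) (auto simp: bF i2)
  have m2: "AE x in M. real_cond_exp M F (\<lambda>x. indicator B x * (h x * of_bool (A x))) x = real_cond_exp M F (\<lambda>x. 0) x"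
    by (rule real_cond_exp_cong) (use z in auto)
  have m3: "AE x in M. real_cond_exp M F (\<lambda>x. 0) x = 0"
    by (rule real_cond_exp_F_meas) auto
  show ?thesis using m1 m2 m3 AE_space
  proof eventually_elim
    case (elim x)
    then show ?case
      by (auto simp: cE_def B_def indicator_def)
  qed
qed

lemma int_bdd1:
  fixes f :: "'w \<Rightarrow> real"
  assumes "f \<in> borel_measurable M" "AE x in M. \<bar>f x\<bar> \<le> 1"
  shows "integrable M f"
proof (rule Bochner_Integration.integrable_bound)
  show "integrable M (\<lambda>_. 1::real)" by simp
qed (use assms in auto)

lemma cE_01:
  assumes [measurable]: "f \<in> borel_measurable M" and f01: "\<And>x. 0 \<le> f x \<and> f x \<le> 1"
  shows "AE x in M. 0 \<le> cE M X MX f x \<and> cE M X MX f x \<le> 1"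
proof -
  have fi: "integrable M f" by (rule int_bdd1) (use f01 in auto)
  have "AE x in M. 0 \<le> real_cond_exp M F f x" by (rule real_cond_exp_pos) (use f01 in auto)
  moreover have "AE x in M. real_cond_exp M F f x \<le> 1" by (rule real_cond_exp_le_c[OF fi]) (use f01 in auto)
  ultimately show ?thesis unfolding cE_def by auto
qed

lemma setint_ind: "(\<integral>x\<in>A. f x \<partial>M) = (\<integral>x. indicator A x * f x \<partial>M)" for f :: "'w \<Rightarrow> real"
  unfolding set_lebesgue_integral_def by simp

lemma CI_fun:
  fixes Z :: "'w \<Rightarrow> bool" and V :: "'w \<Rightarrow> 'v" and g :: "'v \<Rightarrow> real"
  assumes ci: "cond_indep M X MX Z V MW" and Vm[measurable]: "V \<in> M \<rightarrow>\<^sub>M MW"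
    and Zm[measurable]: "Z \<in> M \<rightarrow>\<^sub>M count_space UNIV"
    and gm[measurable]: "g \<in> borel_measurable MW" and gi: "integrable M (\<lambda>w. g (V w))"
  shows "AE w in M. cE M X MX (\<lambda>v. g (V v) * of_bool (Z v = z)) w = PZ M X MX Z z w * cE M X MX (\<lambda>v. g (V v)) w"
proof -
  let ?P = "PZ M X MX Z z"
  let ?G = "\<lambda>w. g (V w)"
  have Pm[measurable]: "?P \<in> borel_measurable F" "?P \<in> borel_measurable M" unfolding PZ_def by auto
  have P01: "AE x in M. 0 \<le> ?P x \<and> ?P x \<le> 1" unfolding PZ_def by (rule cE_01) auto
  have Gm[measurable]: "?G \<in> borel_measurable M" by measurable
  have stepA: "(\<integral>x. (indicator A x * of_bool (Z x = z)) * indicator (V -` B \<inter> space M) x \<partial>M)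
      = (\<integral>x. (indicator A x * ?P x) * indicator (V -` B \<inter> space M) x \<partial>M)"
    if AF: "A \<in> sets F" and B[measurable]: "B \<in> sets MW" for A B
  proof -
    have AM[measurable]: "A \<in> sets M" using AF subalg by (auto simp: subalgebra_def)
    have aF: "indicator A \<in> borel_measurable F" using AF by simp
    have aPF: "(\<lambda>x. indicator A x * ?P x) \<in> borel_measurable F" using aF Pm(1) by measurable
    have ciB: "AE w in M. cE M X MX (\<lambda>v. of_bool (Z v \<in> {z} \<and> V v \<in> B)) w
                   = cE M X MX (\<lambda>v. of_bool (Z v \<in> {z})) w * cE M X MX (\<lambda>v. of_bool (V v \<in> B)) w"
      using ci B unfolding cond_indep_def by blast
    have e1: "(\<integral>x. ((indicator A x * of_bool (Z x = z)) * indicator (V -` B \<inter> space M) x :: real) \<partial>M)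
        = (\<integral>x. (indicator A x * of_bool (Z x \<in> {z} \<and> V x \<in> B) :: real) \<partial>M)"
      by (rule Bochner_Integration.integral_cong) (auto simp: indicator_def)
    have i1: "integrable M (\<lambda>x. indicator A x * of_bool (Z x \<in> {z} \<and> V x \<in> B) :: real)"
      by (rule int_bdd1) (auto simp: indicator_def)
    have e2: "(\<integral>x. indicator A x * of_bool (Z x \<in> {z} \<and> V x \<in> B) \<partial>M)
        = (\<integral>x. indicator A x * cE M X MX (\<lambda>v. of_bool (Z v \<in> {z} \<and> V v \<in> B)) x \<partial>M)"
      using T(2)[OF i1 aF] by simp
    have e3: "(\<integral>x. indicator A x * cE M X MX (\<lambda>v. of_bool (Z v \<in> {z} \<and> V v \<in> B)) x \<partial>M)
        = (\<integral>x. (indicator A x * ?P x) * cE M X MX (\<lambda>v. of_bool (V v \<in> B)) x \<partial>M)"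
      by (rule integral_cong_AE) (use ciB in \<open>auto simp: PZ_def\<close>)
    have i2: "integrable M (\<lambda>x. (indicator A x * ?P x) * of_bool (V x \<in> B))"
      by (rule int_bdd1) (use P01 in \<open>auto simp: indicator_def\<close>)
    have e4: "(\<integral>x. (indicator A x * ?P x) * cE M X MX (\<lambda>v. of_bool (V v \<in> B)) x \<partial>M)
        = (\<integral>x. (indicator A x * ?P x) * of_bool (V x \<in> B) \<partial>M)"
      using T(2)[OF i2 aPF] by simp
    have e5: "(\<integral>x. (indicator A x * ?P x) * of_bool (V x \<in> B) \<partial>M)
        = (\<integral>x. (indicator A x * ?P x) * indicator (V -` B \<inter> space M) x \<partial>M)"
      by (rule Bochner_Integration.integral_cong) (auto simp: indicator_def)
    show ?thesis using e1 e2 e3 e4 e5 by simp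
  qed
  have stepB: "(\<integral>x. (indicator A x * of_bool (Z x = z)) * ?G x \<partial>M) = (\<integral>x. (indicator A x * ?P x) * ?G x \<partial>M)"
    if AF: "A \<in> sets F" for A
  proof -
    have AM[measurable]: "A \<in> sets M" using AF subalg by (auto simp: subalgebra_def)
    show ?thesis
    proof (rule dens_eq[where V=V and MW=MW and g=g])
      show "integrable M (\<lambda>x. indicator A x * of_bool (Z x = z) :: real)"
        by (rule int_bdd1) (auto simp: indicator_def)
      show "integrable M (\<lambda>x. indicator A x * ?P x)"
        by (rule int_bdd1) (use P01 in \<open>auto simp: indicator_def\<close>)
      show "AE x in M. 0 \<le> indicator A x * ?P x"
        using P01 by eventually_elim auto
    qed (auto simp: stepA[OF AF])
  qed
  have Gzi: "integrable M (\<lambda>x. ?G x * of_bool (Z x = z))"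
    by (rule Bochner_Integration.integrable_bound[OF gi]) auto
  have CGi: "integrable M (cE M X MX ?G)" unfolding cE_def using real_cond_exp_int(1)[OF gi] .
  have rhsi: "integrable M (\<lambda>x. ?P x * cE M X MX ?G x)"
    by (rule Bochner_Integration.integrable_bound[OF CGi]) (use P01 in \<open>auto simp: abs_mult intro!: mult_left_le_one_le\<close>)
  have "AE x in M. real_cond_exp M F (\<lambda>x. ?G x * of_bool (Z x = z)) x = ?P x * cE M X MX ?G x"
  proof (rule real_cond_exp_charact)
    fix A assume AF: "A \<in> sets F"
    have AM[measurable]: "A \<in> sets M" using AF subalg by (auto simp: subalgebra_def)
    have aPF: "(\<lambda>x. indicator A x * ?P x) \<in> borel_measurable F" using AF Pm(1) by measurable
    have iAP: "integrable M (\<lambda>x. (indicator A x * ?P x) * ?G x)"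
      by (rule Bochner_Integration.integrable_bound[OF gi]) (use P01 in \<open>auto simp: abs_mult indicator_def intro!: mult_left_le_one_le\<close>)
    have "(\<integral>x\<in>A. ?P x * cE M X MX ?G x \<partial>M) = (\<integral>x. (indicator A x * ?P x) * cE M X MX ?G x \<partial>M)"
      by (simp add: setint_ind mult.assoc)
    also have "\<dots> = (\<integral>x. (indicator A x * ?P x) * ?G x \<partial>M)"
      using T(2)[OF iAP aPF] by simp
    also have "\<dots> = (\<integral>x. (indicator A x * of_bool (Z x = z)) * ?G x \<partial>M)"
      using stepB[OF AF] by simp
    also have "\<dots> = (\<integral>x\<in>A. ?G x * of_bool (Z x = z) \<partial>M)"
      by (simp add: setint_ind mult_ac)
    finally show "(\<integral>x\<in>A. ?G x * of_bool (Z x = z) \<partial>M) = (\<integral>x\<in>A. ?P x * cE M X MX ?G x \<partial>M)" by simp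
  qed (auto simp: Gzi rhsi)
  then show ?thesis unfolding cE_def .
qed

lemma cE_abs:
  assumes Gi: "integrable M G"
  shows "AE x in M. \<bar>cE M X MX G x\<bar> \<le> cE M X MX (\<lambda>v. \<bar>G v\<bar>) x"
proof -
  have a1: "AE x in M. real_cond_exp M F G x \<le> real_cond_exp M F (\<lambda>v. \<bar>G v\<bar>) x"
    by (rule real_cond_exp_mono) (auto simp: Gi)
  have a2: "AE x in M. real_cond_exp M F (\<lambda>v. -1 * G v) x \<le> real_cond_exp M F (\<lambda>v. \<bar>G v\<bar>) x"
    by (rule real_cond_exp_mono) (auto simp: Gi)
  have a3: "AE x in M. real_cond_exp M F (\<lambda>v. -1 * G v) x = -1 * real_cond_exp M F G x"
    by (rule real_cond_exp_cmult[OF Gi])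
  show ?thesis using a1 a2 a3 unfolding cE_def by eventually_elim auto
qed

lemma EPsi:
  fixes Z :: "'w \<Rightarrow> bool" and f G a :: "'w \<Rightarrow> real"
  assumes Zm[measurable]: "Z \<in> M \<rightarrow>\<^sub>M count_space UNIV"
    and Ppos: "AE w in M. PZ M X MX Z z w > 0"
    and fm[measurable]: "f \<in> borel_measurable M"
    and Gi: "integrable M G"
    and fG: "\<forall>w\<in>space M. f w * of_bool (Z w = z) = G w * of_bool (Z w = z)"
    and H1: "AE w in M. cE M X MX (\<lambda>v. G v * of_bool (Z v = z)) w = PZ M X MX Z z w * cE M X MX G w"
    and H2: "AE w in M. cE M X MX (\<lambda>v. \<bar>G v\<bar> * of_bool (Z v = z)) w = PZ M X MX Z z w * cE M X MX (\<lambda>v. \<bar>G v\<bar>) w"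
    and aF: "a \<in> borel_measurable F"
    and B: "integrable M (\<lambda>w. \<bar>a w\<bar> * cE M X MX (\<lambda>v. \<bar>G v\<bar>) w)"
  shows "integrable M (\<lambda>w. a w * psi M X MX Z z f w)"
    and "(\<integral>w. a w * psi M X MX Z z f w \<partial>M) = (\<integral>w. a w * cE M X MX G w \<partial>M)"
    and "AE w in M. cEev M X MX (\<lambda>v. Z v = z) f w = cE M X MX G w"
proof -
  let ?P = "PZ M X MX Z z"
  let ?CG = "cE M X MX G"
  let ?C = "cE M X MX"
  define zt where "zt = (\<lambda>w. of_bool (Z w = z) :: real)"
  have ztm[measurable]: "zt \<in> borel_measurable M" unfolding zt_def by measurable
  have Gm[measurable]: "G \<in> borel_measurable M" using Gi by auto
  have aM[measurable]: "a \<in> borel_measurable M" using F_to_M[OF aF] .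
  have PF[measurable]: "?P \<in> borel_measurable F" "?P \<in> borel_measurable M" unfolding PZ_def by auto
  have CGF[measurable]: "?CG \<in> borel_measurable F" "?CG \<in> borel_measurable M" by auto
  have CGi: "integrable M ?CG" unfolding cE_def using real_cond_exp_int(1)[OF Gi] .
  have absCG: "AE x in M. \<bar>?CG x\<bar> \<le> ?C (\<lambda>v. \<bar>G v\<bar>) x" by (rule cE_abs[OF Gi])
  have cong: "AE w in M. ?C (\<lambda>v. f v * of_bool (Z v = z)) w = ?C (\<lambda>v. G v * of_bool (Z v = z)) w"
    unfolding cE_def by (rule real_cond_exp_cong) (use fG in auto)
  show mEq: "AE w in M. cEev M X MX (\<lambda>v. Z v = z) f w = ?CG w"
    using cong H1 Ppos by eventually_elim (auto simp: cEev_def PZ_def)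
  have dec: "AE w in M. a w * psi M X MX Z z f w
      = (a w / ?P w) * (G w * zt w) - (a w * ?CG w / ?P w) * zt w + a w * ?CG w"
    using mEq Ppos AE_space
  proof eventually_elim
    case (elim w)
    have ps: "psi M X MX Z z f w = (f w - ?CG w) * zt w / ?P w + ?CG w"
      using elim(1) by (simp add: psi_def zt_def)
    show ?case
    proof (cases "Z w = z")
      case True
      then have "f w = G w" using fG elim(3) by auto
      then show ?thesis using True elim(2) unfolding ps by (simp add: zt_def field_simps)
    next
      case False
      then show ?thesis unfolding ps by (simp add: zt_def)
    qed
  qed
  have Gzi: "integrable M (\<lambda>w. \<bar>G w\<bar> * zt w)"
    by (rule Bochner_Integration.integrable_bound[OF Gi]) (auto simp: zt_def)
  have c1F: "(\<lambda>w. \<bar>a w / ?P w\<bar>) \<in> borel_measurable F" using aF PF(1) by measurable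
  have t1a: "integrable M (\<lambda>w. \<bar>a w / ?P w\<bar> * (\<bar>G w\<bar> * zt w))"
  proof (rule L_int[OF c1F _ Gzi])
    show "0 \<le> \<bar>G x\<bar> * zt x" for x by (simp add: zt_def)
    show "integrable M (\<lambda>w. \<bar>a w / ?P w\<bar> * ?C (\<lambda>w. \<bar>G w\<bar> * zt w) w)"
    proof (rule integrable_cong_AE_imp[OF B])
      show "AE w in M. \<bar>a w\<bar> * ?C (\<lambda>v. \<bar>G v\<bar>) w = \<bar>a w / ?P w\<bar> * ?C (\<lambda>w. \<bar>G w\<bar> * zt w) w"
        using H2 Ppos by eventually_elim (auto simp: zt_def abs_divide)
    qed measurable
  qed simp
  have t1i: "integrable M (\<lambda>w. (a w / ?P w) * (G w * zt w))"
    by (rule Bochner_Integration.integrable_bound[OF t1a]) (auto simp: abs_mult zt_def)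
  have t1e: "(\<integral>w. (a w / ?P w) * (G w * zt w) \<partial>M) = (\<integral>w. a w * ?CG w \<partial>M)"
  proof -
    have "(\<integral>w. (a w / ?P w) * (G w * zt w) \<partial>M) = (\<integral>w. (a w / ?P w) * ?C (\<lambda>w. G w * zt w) w \<partial>M)"
      using T(2)[OF t1i] aF PF(1) by simp
    also have "\<dots> = (\<integral>w. a w * ?CG w \<partial>M)"
      by (rule integral_cong_AE) (use H1 Ppos in \<open>auto simp: zt_def\<close>)
    finally show ?thesis .
  qed
  have t3i: "integrable M (\<lambda>w. a w * ?CG w)"
    by (rule Bochner_Integration.integrable_bound[OF B]) (use absCG in \<open>auto simp: abs_mult intro!: mult_left_mono\<close>)
  have c2F: "(\<lambda>w. \<bar>a w * ?CG w / ?P w\<bar>) \<in> borel_measurable F" using aF PF(1) CGF(1) by measurable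
  have t2a: "integrable M (\<lambda>w. \<bar>a w * ?CG w / ?P w\<bar> * zt w)"
  proof (rule L_int[OF c2F])
    show "integrable M zt" by (rule int_bdd1) (auto simp: zt_def)
    show "0 \<le> zt x" for x by (simp add: zt_def)
    show "integrable M (\<lambda>w. \<bar>a w * ?CG w / ?P w\<bar> * ?C zt w)"
    proof (rule Bochner_Integration.integrable_bound[OF t3i])
      show "AE w in M. norm (\<bar>a w * ?CG w / ?P w\<bar> * ?C zt w) \<le> norm (a w * ?CG w)"
        using Ppos by eventually_elim (auto simp: zt_def PZ_def abs_mult abs_divide)
    qed measurable
  qed simp
  have t2i: "integrable M (\<lambda>w. (a w * ?CG w / ?P w) * zt w)"
    by (rule Bochner_Integration.integrable_bound[OF t2a]) (auto simp: abs_mult zt_def)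
  have t2e: "(\<integral>w. (a w * ?CG w / ?P w) * zt w \<partial>M) = (\<integral>w. a w * ?CG w \<partial>M)"
  proof -
    have "(\<integral>w. (a w * ?CG w / ?P w) * zt w \<partial>M) = (\<integral>w. (a w * ?CG w / ?P w) * ?C zt w \<partial>M)"
      using T(2)[OF t2i] aF PF(1) CGF(1) by simp
    also have "\<dots> = (\<integral>w. a w * ?CG w \<partial>M)"
      by (rule integral_cong_AE) (use Ppos in \<open>auto simp: zt_def PZ_def\<close>)
    finally show ?thesis .
  qed
  have sumi: "integrable M (\<lambda>w. (a w / ?P w) * (G w * zt w) - (a w * ?CG w / ?P w) * zt w + a w * ?CG w)"
    using t1i t2i t3i by auto
  show ii: "integrable M (\<lambda>w. a w * psi M X MX Z z f w)"
    by (rule integrable_cong_AE_imp[OF sumi _ dec[THEN AE_symmetric]]) (unfold psi_def cEev_def PZ_def; measurable)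
  have "(\<integral>w. a w * psi M X MX Z z f w \<partial>M) = (\<integral>w. (a w / ?P w) * (G w * zt w) - (a w * ?CG w / ?P w) * zt w + a w * ?CG w \<partial>M)"
    by (rule integral_cong_AE) (use dec in \<open>auto simp: psi_def cEev_def PZ_def\<close>)
  also have "\<dots> = (\<integral>w. a w * ?CG w \<partial>M)"
    using t1i t2i t3i t1e t2e by simp
  finally show "(\<integral>w. a w * psi M X MX Z z f w \<partial>M) = (\<integral>w. a w * ?CG w \<partial>M)" .
qed


lemma cEev_CI:
  fixes Z :: "'w \<Rightarrow> bool" and f G :: "'w \<Rightarrow> real"
  assumes Zm[measurable]: "Z \<in> M \<rightarrow>\<^sub>M count_space UNIV"
    and Ppos: "AE w in M. PZ M X MX Z z w > 0"
    and fm[measurable]: "f \<in> borel_measurable M" and Gm[measurable]: "G \<in> borel_measurable M"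
    and fG: "\<forall>w\<in>space M. f w * of_bool (Z w = z) = G w * of_bool (Z w = z)"
    and H1: "AE w in M. cE M X MX (\<lambda>v. G v * of_bool (Z v = z)) w = PZ M X MX Z z w * cE M X MX G w"
  shows "AE w in M. cEev M X MX (\<lambda>v. Z v = z) f w = cE M X MX G w"
proof -
  have cong: "AE w in M. cE M X MX (\<lambda>v. f v * of_bool (Z v = z)) w = cE M X MX (\<lambda>v. G v * of_bool (Z v = z)) w"
    unfolding cE_def by (rule real_cond_exp_cong) (use fG in auto)
  show ?thesis
    using cong H1 Ppos by eventually_elim (auto simp: cEev_def PZ_def)
qed

lemma alg:
  fixes ea eb na nb :: real
  assumes "ea \<ge> 0" "eb \<ge> 0" "ea > 0 \<and> eb > 0 \<longrightarrow> na / ea = nb / eb" "ea = 0 \<longrightarrow> na = 0" "eb = 0 \<longrightarrow> nb = 0"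
  shows "eb / (ea + eb) * (na + nb) = nb"
proof (cases "eb = 0")
  case True then show ?thesis using assms by simp
next
  case False
  then have eb: "eb > 0" using assms by simp
  show ?thesis
  proof (cases "ea = 0")
    case True then show ?thesis using assms eb by simp
  next
    case False
    then have ea: "ea > 0" using assms by simp
    then have "na = nb * ea / eb" using assms(3) eb by (simp add: field_simps)
    then show ?thesis using ea eb by (simp add: field_simps)
  qed
qed
end

locale main_setup = ce_setup M X MX for M :: "'w measure" and X :: "'w \<Rightarrow> 'x" and MX +
  fixes Z S1 S0 :: "'w \<Rightarrow> bool" and Y1 Y0 :: "'w \<Rightarrow> real"
  assumes Z_meas[measurable]: "Z \<in> M \<rightarrow>\<^sub>M count_space UNIV"
    and S1_meas[measurable]: "S1 \<in> M \<rightarrow>\<^sub>M count_space UNIV"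
    and S0_meas[measurable]: "S0 \<in> M \<rightarrow>\<^sub>M count_space UNIV"
    and Y1_int: "integrable M Y1"
    and Y0_int: "integrable M Y0"
    and A1: "cond_indep M X MX Z (\<lambda>w. (S0 w, S1 w, Y0 w, Y1 w))
               (count_space UNIV \<Otimes>\<^sub>M (count_space UNIV \<Otimes>\<^sub>M (borel \<Otimes>\<^sub>M borel)))"
    and A2: "\<forall>w\<in>space M. S0 w \<longrightarrow> S1 w"
    and A3_1: "AE w in M. eU M X MX S1 S0 (True, True) w > 0 \<and> eU M X MX S1 S0 (True, False) w > 0 \<longrightarrow>
                 cEev M X MX (\<lambda>v. (S1 v, S0 v) = (True, True)) Y1 w
               = cEev M X MX (\<lambda>v. (S1 v, S0 v) = (True, False)) Y1 w"
    and A3_0: "AE w in M. eU M X MX S1 S0 (False, False) w > 0 \<and> eU M X MX S1 S0 (True, False) w > 0 \<longrightarrow>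
                 cEev M X MX (\<lambda>v. (S1 v, S0 v) = (False, False)) Y0 w
               = cEev M X MX (\<lambda>v. (S1 v, S0 v) = (True, False)) Y0 w"
    and overlap: "AE w in M. 0 < PZ M X MX Z True w \<and> PZ M X MX Z True w < 1"
    and pos_p: "AE w in M. 0 < pz M X MX Z S1 S0 True w \<and> pz M X MX Z S1 S0 False w < 1"

context main_setup begin

abbreviation "C \<equiv> cE M X MX"
abbreviation "V \<equiv> (\<lambda>w. (S0 w, S1 w, Y0 w, Y1 w))"
abbreviation "MW \<equiv> (count_space UNIV \<Otimes>\<^sub>M (count_space UNIV \<Otimes>\<^sub>M (borel \<Otimes>\<^sub>M borel))) :: (bool \<times> bool \<times> real \<times> real) measure"

lemma Y1m[measurable]: "Y1 \<in> borel_measurable M" using Y1_int by auto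
lemma Y0m[measurable]: "Y0 \<in> borel_measurable M" using Y0_int by auto
lemma Vm[measurable]: "V \<in> M \<rightarrow>\<^sub>M MW" by measurable

lemma CI:
  assumes gm[measurable]: "g \<in> borel_measurable MW" and gi: "integrable M (\<lambda>w. g (V w))"
  shows "AE w in M. C (\<lambda>v. g (V v) * of_bool (Z v = z)) w = PZ M X MX Z z w * C (\<lambda>v. g (V v)) w"
  by (rule CI_fun[OF A1 Vm Z_meas gm gi])

lemma cE_const: "AE w in M. C (\<lambda>_. c) w = c"
  unfolding cE_def by (rule real_cond_exp_F_meas) auto

lemma cE_diff: fixes f g Y :: "'w \<Rightarrow> real" shows "integrable M f \<Longrightarrow> integrable M g \<Longrightarrow> AE w in M. C (\<lambda>v. f v - g v) w = C f w - C g w"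
  unfolding cE_def by (rule real_cond_exp_diff)

lemma cE_add: fixes f g Y :: "'w \<Rightarrow> real" shows "integrable M f \<Longrightarrow> integrable M g \<Longrightarrow> AE w in M. C (\<lambda>v. f v + g v) w = C f w + C g w"
  unfolding cE_def by (rule real_cond_exp_add)

lemma cE_cong: fixes f g Y :: "'w \<Rightarrow> real" shows "f \<in> borel_measurable M \<Longrightarrow> g \<in> borel_measurable M \<Longrightarrow> (\<And>w. w \<in> space M \<Longrightarrow> f w = g w) \<Longrightarrow> AE w in M. C f w = C g w"
  unfolding cE_def by (rule real_cond_exp_cong) auto

lemma cE_int: fixes f g Y :: "'w \<Rightarrow> real" shows "integrable M f \<Longrightarrow> integrable M (C f)" "integrable M f \<Longrightarrow> (\<integral>w. C f w \<partial>M) = (\<integral>w. f w \<partial>M)"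
  unfolding cE_def using real_cond_exp_int by auto

lemma bint: fixes f g Y :: "'w \<Rightarrow> real" shows "f \<in> borel_measurable M \<Longrightarrow> (\<And>w. w \<in> space M \<Longrightarrow> \<bar>f w\<bar> \<le> 1) \<Longrightarrow> integrable M f"
  by (rule int_bdd1) auto

lemma bint_Y: fixes f g Y :: "'w \<Rightarrow> real" shows "integrable M Y \<Longrightarrow> Measurable.pred M A \<Longrightarrow> integrable M (\<lambda>w. Y w * of_bool (A w))"
  by (rule Bochner_Integration.integrable_bound) auto

lemma P1pos: "AE w in M. 0 < PZ M X MX Z True w" using overlap by auto

lemma P0eq: "AE w in M. PZ M X MX Z False w = 1 - PZ M X MX Z True w"
proof -
  have "AE w in M. C (\<lambda>v. 1 - of_bool (Z v = True)) w = C (\<lambda>_. 1) w - C (\<lambda>v. of_bool (Z v = True)) w"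
    by (rule cE_diff) (auto intro!: bint)
  moreover have "AE w in M. C (\<lambda>v. of_bool (Z v = False)) w = C (\<lambda>v. 1 - of_bool (Z v = True)) w"
    by (rule cE_cong) auto
  ultimately show ?thesis using cE_const[of 1] unfolding PZ_def by eventually_elim auto
qed

lemma P0pos: "AE w in M. 0 < PZ M X MX Z False w" using P0eq overlap by eventually_elim auto

lemma q01: "AE w in M. 0 \<le> C (\<lambda>v. of_bool (S1 v)) w \<and> C (\<lambda>v. of_bool (S1 v)) w \<le> 1"
  "AE w in M. 0 \<le> C (\<lambda>v. of_bool (S0 v)) w \<and> C (\<lambda>v. of_bool (S0 v)) w \<le> 1"
  by (rule cE_01; simp)+

lemma e01: "AE w in M. 0 \<le> eU M X MX S1 S0 u w \<and> eU M X MX S1 S0 u w \<le> 1"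
  unfolding eU_def by (rule cE_01) auto

lemma CI1_S1: "AE w in M. C (\<lambda>v. of_bool (S1 v) * of_bool (Z v = z)) w = PZ M X MX Z z w * C (\<lambda>v. of_bool (S1 v)) w"
  using CI[of "\<lambda>p. of_bool (fst (snd p))" z] by (simp add: bint)
lemma CI1_S0: "AE w in M. C (\<lambda>v. of_bool (S0 v) * of_bool (Z v = z)) w = PZ M X MX Z z w * C (\<lambda>v. of_bool (S0 v)) w"
  using CI[of "\<lambda>p. of_bool (fst p)" z] by (simp add: bint)
lemma CI1_nS1: "AE w in M. C (\<lambda>v. (1 - of_bool (S1 v)) * of_bool (Z v = z)) w = PZ M X MX Z z w * C (\<lambda>v. 1 - of_bool (S1 v)) w"
  using CI[of "\<lambda>p. 1 - of_bool (fst (snd p))" z] by (simp add: bint)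
lemma CI1_nS0: "AE w in M. C (\<lambda>v. (1 - of_bool (S0 v)) * of_bool (Z v = z)) w = PZ M X MX Z z w * C (\<lambda>v. 1 - of_bool (S0 v)) w"
  using CI[of "\<lambda>p. 1 - of_bool (fst p)" z] by (simp add: bint)
lemma CI1_Y1S1: "AE w in M. C (\<lambda>v. Y1 v * of_bool (S1 v) * of_bool (Z v = z)) w = PZ M X MX Z z w * C (\<lambda>v. Y1 v * of_bool (S1 v)) w"
  using CI[of "\<lambda>p. snd (snd (snd p)) * of_bool (fst (snd p))" z] by (simp add: bint_Y Y1_int)
lemma CI1_Y0S0: "AE w in M. C (\<lambda>v. Y0 v * of_bool (S0 v) * of_bool (Z v = z)) w = PZ M X MX Z z w * C (\<lambda>v. Y0 v * of_bool (S0 v)) w"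
  using CI[of "\<lambda>p. fst (snd (snd p)) * of_bool (fst p)" z] by (simp add: bint_Y Y0_int)
lemma int_Y1nS1: "integrable M (\<lambda>v. Y1 v * (1 - of_bool (S1 v)))"
  by (rule Bochner_Integration.integrable_bound[OF Y1_int]) auto
lemma int_Y0nS0: "integrable M (\<lambda>v. Y0 v * (1 - of_bool (S0 v)))"
  by (rule Bochner_Integration.integrable_bound[OF Y0_int]) auto
lemma CI1_Y1nS1: "AE w in M. C (\<lambda>v. Y1 v * (1 - of_bool (S1 v)) * of_bool (Z v = z)) w = PZ M X MX Z z w * C (\<lambda>v. Y1 v * (1 - of_bool (S1 v))) w"
  using CI[of "\<lambda>p. snd (snd (snd p)) * (1 - of_bool (fst (snd p)))" z] by (simp add: int_Y1nS1)
lemma CI1_Y0nS0: "AE w in M. C (\<lambda>v. Y0 v * (1 - of_bool (S0 v)) * of_bool (Z v = z)) w = PZ M X MX Z z w * C (\<lambda>v. Y0 v * (1 - of_bool (S0 v))) w"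
  using CI[of "\<lambda>p. fst (snd (snd p)) * (1 - of_bool (fst p))" z] by (simp add: int_Y0nS0)

lemma pzT: "AE w in M. pz M X MX Z S1 S0 True w = C (\<lambda>v. of_bool (S1 v)) w"
  unfolding pz_def by (rule cEev_CI[OF Z_meas P1pos _ _ _ CI1_S1]) (auto simp: obsS_def)
lemma pzF: "AE w in M. pz M X MX Z S1 S0 False w = C (\<lambda>v. of_bool (S0 v)) w"
  unfolding pz_def by (rule cEev_CI[OF Z_meas P0pos _ _ _ CI1_S0]) (auto simp: obsS_def)

lemma nS1: "AE w in M. C (\<lambda>v. 1 - of_bool (S1 v)) w = 1 - C (\<lambda>v. of_bool (S1 v)) w"
proof -
  have "AE w in M. C (\<lambda>v. 1 - of_bool (S1 v)) w = C (\<lambda>_. 1) w - C (\<lambda>v. of_bool (S1 v)) w"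
    by (rule cE_diff) (auto intro!: bint)
  then show ?thesis using cE_const[of 1] by eventually_elim auto
qed
lemma nS0: "AE w in M. C (\<lambda>v. 1 - of_bool (S0 v)) w = 1 - C (\<lambda>v. of_bool (S0 v)) w"
proof -
  have "AE w in M. C (\<lambda>v. 1 - of_bool (S0 v)) w = C (\<lambda>_. 1) w - C (\<lambda>v. of_bool (S0 v)) w"
    by (rule cE_diff) (auto intro!: bint)
  then show ?thesis using cE_const[of 1] by eventually_elim auto
qed

lemma e10: "AE w in M. eU M X MX S1 S0 (True, False) w = C (\<lambda>v. of_bool (S1 v)) w - C (\<lambda>v. of_bool (S0 v)) w"
proof -
  have "AE w in M. C (\<lambda>v. of_bool ((S1 v, S0 v) = (True, False))) w = C (\<lambda>v. of_bool (S1 v) - of_bool (S0 v)) w"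
    by (rule cE_cong) (use A2 in auto)
  moreover have "AE w in M. C (\<lambda>v. of_bool (S1 v) - of_bool (S0 v)) w = C (\<lambda>v. of_bool (S1 v)) w - C (\<lambda>v. of_bool (S0 v)) w"
    by (rule cE_diff) (auto intro!: bint)
  ultimately show ?thesis unfolding eU_def by eventually_elim auto
qed
lemma e11: "AE w in M. eU M X MX S1 S0 (True, True) w = C (\<lambda>v. of_bool (S0 v)) w"
  unfolding eU_def by (rule cE_cong) (use A2 in auto)
lemma e00: "AE w in M. eU M X MX S1 S0 (False, False) w = 1 - C (\<lambda>v. of_bool (S1 v)) w"
proof -
  have "AE w in M. C (\<lambda>v. of_bool ((S1 v, S0 v) = (False, False))) w = C (\<lambda>v. 1 - of_bool (S1 v)) w"
    by (rule cE_cong) (use A2 in auto)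
  then show ?thesis using nS1 unfolding eU_def by eventually_elim auto
qed

lemma q0_le_q1: "AE w in M. C (\<lambda>v. of_bool (S0 v)) w \<le> C (\<lambda>v. of_bool (S1 v)) w"
  using e10 e01[of "(True, False)"] by eventually_elim auto
lemma q_pos: "AE w in M. 0 < C (\<lambda>v. of_bool (S1 v)) w \<and> C (\<lambda>v. of_bool (S0 v)) w < 1"
  using pos_p pzT pzF by eventually_elim auto

lemma mu11: "AE w in M. muzs M X MX Z S1 S0 Y1 Y0 True True w = C (\<lambda>v. Y1 v * of_bool (S1 v)) w / C (\<lambda>v. of_bool (S1 v)) w"
proof -
  have a: "AE w in M. C (\<lambda>v. obsY Z Y1 Y0 v * of_bool (Z v = True \<and> obsS Z S1 S0 v = True)) w
      = C (\<lambda>v. Y1 v * of_bool (S1 v) * of_bool (Z v = True)) w"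
    by (rule cE_cong) (auto simp: obsY_def obsS_def)
  have b: "AE w in M. C (\<lambda>v. of_bool (Z v = True \<and> obsS Z S1 S0 v = True)) w
      = C (\<lambda>v. of_bool (S1 v) * of_bool (Z v = True)) w"
    by (rule cE_cong) (auto simp: obsS_def)
  show ?thesis using a b CI1_Y1S1[of True] CI1_S1[of True] P1pos
    by eventually_elim (simp add: muzs_def cEev_def)
qed

lemma mu00: "AE w in M. muzs M X MX Z S1 S0 Y1 Y0 False False w = C (\<lambda>v. Y0 v * (1 - of_bool (S0 v))) w / (1 - C (\<lambda>v. of_bool (S0 v)) w)"
proof -
  have a: "AE w in M. C (\<lambda>v. obsY Z Y1 Y0 v * of_bool (Z v = False \<and> obsS Z S1 S0 v = False)) w
      = C (\<lambda>v. Y0 v * (1 - of_bool (S0 v)) * of_bool (Z v = False)) w"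
    by (rule cE_cong) (auto simp: obsY_def obsS_def)
  have b: "AE w in M. C (\<lambda>v. of_bool (Z v = False \<and> obsS Z S1 S0 v = False)) w
      = C (\<lambda>v. (1 - of_bool (S0 v)) * of_bool (Z v = False)) w"
    by (rule cE_cong) (auto simp: obsS_def)
  show ?thesis using a b CI1_Y0nS0[of False] CI1_nS0[of False] P0pos nS0
    by eventually_elim (simp add: muzs_def cEev_def)
qed

abbreviation "n1 u \<equiv> C (\<lambda>v. Y1 v * of_bool ((S1 v, S0 v) = u))"
abbreviation "n0 u \<equiv> C (\<lambda>v. Y0 v * of_bool ((S1 v, S0 v) = u))"

lemma decomp1: "AE w in M. C (\<lambda>v. Y1 v * of_bool (S1 v)) w = n1 (True, True) w + n1 (True, False) w"
proof -
  have "AE w in M. C (\<lambda>v. Y1 v * of_bool (S1 v)) w = C (\<lambda>v. Y1 v * of_bool ((S1 v, S0 v) = (True, True)) + Y1 v * of_bool ((S1 v, S0 v) = (True, False))) w"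
    by (rule cE_cong) auto
  moreover have "AE w in M. C (\<lambda>v. Y1 v * of_bool ((S1 v, S0 v) = (True, True)) + Y1 v * of_bool ((S1 v, S0 v) = (True, False))) w = n1 (True, True) w + n1 (True, False) w"
    by (rule cE_add) (auto intro!: bint_Y Y1_int)
  ultimately show ?thesis by eventually_elim auto
qed

lemma decomp0: "AE w in M. C (\<lambda>v. Y0 v * (1 - of_bool (S0 v))) w = n0 (False, False) w + n0 (True, False) w"
proof -
  have "AE w in M. C (\<lambda>v. Y0 v * (1 - of_bool (S0 v))) w = C (\<lambda>v. Y0 v * of_bool ((S1 v, S0 v) = (False, False)) + Y0 v * of_bool ((S1 v, S0 v) = (True, False))) w"
    by (rule cE_cong) auto
  moreover have "AE w in M. C (\<lambda>v. Y0 v * of_bool ((S1 v, S0 v) = (False, False)) + Y0 v * of_bool ((S1 v, S0 v) = (True, False))) w = n0 (False, False) w + n0 (True, False) w"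
    by (rule cE_add) (auto intro!: bint_Y Y0_int)
  ultimately show ?thesis by eventually_elim auto
qed

lemma Z1: "AE w in M. eU M X MX S1 S0 u w = 0 \<longrightarrow> n1 u w = 0"
  unfolding eU_def by (rule Z0[OF Y1_int]) simp
lemma Z0': "AE w in M. eU M X MX S1 S0 u w = 0 \<longrightarrow> n0 u w = 0"
  unfolding eU_def by (rule Z0[OF Y0_int]) simp

lemma key10: "AE w in M. eU M X MX S1 S0 (True, False) w / C (\<lambda>v. of_bool (S1 v)) w * C (\<lambda>v. Y1 v * of_bool (S1 v)) w = n1 (True, False) w"
  using decomp1 Z1[of "(True,True)"] Z1[of "(True,False)"] e01[of "(True,True)"] e01[of "(True,False)"] e10 e11 A3_1
proof eventually_elim
  case (elim w)
  show ?case
    using alg[of "eU M X MX S1 S0 (True, True) w" "eU M X MX S1 S0 (True, False) w" "n1 (True, True) w" "n1 (True, False) w"] elim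
    by (simp add: cEev_def eU_def)
qed

lemma key11: "AE w in M. eU M X MX S1 S0 (True, True) w / C (\<lambda>v. of_bool (S1 v)) w * C (\<lambda>v. Y1 v * of_bool (S1 v)) w = n1 (True, True) w"
  using decomp1 Z1[of "(True,True)"] Z1[of "(True,False)"] e01[of "(True,True)"] e01[of "(True,False)"] e10 e11 A3_1
proof eventually_elim
  case (elim w)
  show ?case
    using alg[of "eU M X MX S1 S0 (True, False) w" "eU M X MX S1 S0 (True, True) w" "n1 (True, False) w" "n1 (True, True) w"] elim
    by (simp add: cEev_def eU_def add.commute)
qed

lemma key0_10: "AE w in M. eU M X MX S1 S0 (True, False) w / (1 - C (\<lambda>v. of_bool (S0 v)) w) * C (\<lambda>v. Y0 v * (1 - of_bool (S0 v))) w = n0 (True, False) w"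
  using decomp0 Z0'[of "(False,False)"] Z0'[of "(True,False)"] e01[of "(False,False)"] e01[of "(True,False)"] e10 e00 A3_0
proof eventually_elim
  case (elim w)
  show ?case
    using alg[of "eU M X MX S1 S0 (False, False) w" "eU M X MX S1 S0 (True, False) w" "n0 (False, False) w" "n0 (True, False) w"] elim
    by (simp add: cEev_def eU_def)
qed

lemma key0_00: "AE w in M. eU M X MX S1 S0 (False, False) w / (1 - C (\<lambda>v. of_bool (S0 v)) w) * C (\<lambda>v. Y0 v * (1 - of_bool (S0 v))) w = n0 (False, False) w"
  using decomp0 Z0'[of "(False,False)"] Z0'[of "(True,False)"] e01[of "(False,False)"] e01[of "(True,False)"] e10 e00 A3_0
proof eventually_elim
  case (elim w)
  show ?case
    using alg[of "eU M X MX S1 S0 (True, False) w" "eU M X MX S1 S0 (False, False) w" "n0 (True, False) w" "n0 (False, False) w"] elim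
    by (simp add: cEev_def eU_def add.commute)
qed

lemma meas_F[measurable]:
  "eU M X MX S1 S0 u \<in> borel_measurable F"
  "pz M X MX Z S1 S0 z \<in> borel_measurable F"
  "muzs M X MX Z S1 S0 Y1 Y0 z s \<in> borel_measurable F"
  "PZ M X MX Z z \<in> borel_measurable F"
  unfolding eU_def pz_def muzs_def cEev_def PZ_def by measurable

lemma meas_M[measurable]:
  "eU M X MX S1 S0 u \<in> borel_measurable M"
  "pz M X MX Z S1 S0 z \<in> borel_measurable M"
  "muzs M X MX Z S1 S0 Y1 Y0 z s \<in> borel_measurable M"
  "PZ M X MX Z z \<in> borel_measurable M"
  unfolding eU_def pz_def muzs_def cEev_def PZ_def by measurable

lemma f_meas[measurable]:
  "fYS Z S1 S0 Y1 Y0 \<in> borel_measurable M" "fY1mS Z S1 S0 Y1 Y0 \<in> borel_measurable M"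
  "fS Z S1 S0 \<in> borel_measurable M" "f1mS Z S1 S0 \<in> borel_measurable M"
  unfolding fYS_def fY1mS_def fS_def f1mS_def obsY_def obsS_def by measurable


lemma bound1:
  fixes a h :: "'w \<Rightarrow> real"
  assumes "integrable M h" "a \<in> borel_measurable M" "h \<in> borel_measurable M" "AE w in M. \<bar>a w\<bar> \<le> 1"
  shows "integrable M (\<lambda>w. \<bar>a w\<bar> * h w)"
proof (rule Bochner_Integration.integrable_bound[OF assms(1)])
  show "AE w in M. norm (\<bar>a w\<bar> * h w) \<le> norm (h w)"
    using assms(4) by eventually_elim (auto simp: abs_mult intro!: mult_left_le_one_le)
qed (use assms in measurable)

lemma bound2:
  fixes a h k :: "'w \<Rightarrow> real"
  assumes "integrable M h" "a \<in> borel_measurable M" "k \<in> borel_measurable M" "AE w in M. 0 \<le> k w"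
    "AE w in M. \<bar>a w\<bar> * k w \<le> \<bar>h w\<bar>"
  shows "integrable M (\<lambda>w. \<bar>a w\<bar> * k w)"
proof (rule Bochner_Integration.integrable_bound[OF assms(1)])
  show "AE w in M. norm (\<bar>a w\<bar> * k w) \<le> norm (h w)"
    using assms(4,5) by eventually_elim (auto simp: abs_mult)
qed (use assms in measurable)

lemma EPsiV:
  fixes g :: "bool \<times> bool \<times> real \<times> real \<Rightarrow> real" and f a :: "'w \<Rightarrow> real"
  assumes gm[measurable]: "g \<in> borel_measurable MW" and gi: "integrable M (\<lambda>w. g (V w))"
    and Ppos: "AE w in M. PZ M X MX Z z w > 0"
    and fm[measurable]: "f \<in> borel_measurable M"
    and fG: "\<forall>w\<in>space M. f w * of_bool (Z w = z) = g (V w) * of_bool (Z w = z)"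
    and aF: "a \<in> borel_measurable F"
    and B: "integrable M (\<lambda>w. \<bar>a w\<bar> * C (\<lambda>v. \<bar>g (V v)\<bar>) w)"
  shows "integrable M (\<lambda>w. a w * psi M X MX Z z f w)"
    and "(\<integral>w. a w * psi M X MX Z z f w \<partial>M) = (\<integral>w. a w * C (\<lambda>v. g (V v)) w \<partial>M)"
proof -
  have H1: "AE w in M. C (\<lambda>v. g (V v) * of_bool (Z v = z)) w = PZ M X MX Z z w * C (\<lambda>v. g (V v)) w"
    by (rule CI[OF gm gi])
  have H2: "AE w in M. C (\<lambda>v. \<bar>g (V v)\<bar> * of_bool (Z v = z)) w = PZ M X MX Z z w * C (\<lambda>v. \<bar>g (V v)\<bar>) w"
    using CI[of "\<lambda>p. \<bar>g p\<bar>" z] gi by simp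
  note R = EPsi[OF Z_meas Ppos fm gi fG H1 H2 aF B]
  show "integrable M (\<lambda>w. a w * psi M X MX Z z f w)" by (rule R(1))
  show "(\<integral>w. a w * psi M X MX Z z f w \<partial>M) = (\<integral>w. a w * C (\<lambda>v. g (V v)) w \<partial>M)" by (rule R(2))
qed

lemma int_CabsY1S1: "integrable M (C (\<lambda>v. \<bar>Y1 v * of_bool (S1 v)\<bar>))"
  by (rule cE_int) (auto intro!: bint_Y Y1_int)

lemma P1: "integrable M (\<lambda>w. (eU M X MX S1 S0 (True, False) w / pz M X MX Z S1 S0 True w) * psi M X MX Z True (fYS Z S1 S0 Y1 Y0) w)"
  "(\<integral>w. (eU M X MX S1 S0 (True, False) w / pz M X MX Z S1 S0 True w) * psi M X MX Z True (fYS Z S1 S0 Y1 Y0) w \<partial>M)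
     = (\<integral>w. n1 (True, False) w \<partial>M)"
proof -
  let ?g = "\<lambda>p::bool \<times> bool \<times> real \<times> real. snd (snd (snd p)) * of_bool (fst (snd p))"
  let ?a = "\<lambda>w. eU M X MX S1 S0 (True, False) w / pz M X MX Z S1 S0 True w"
  have gm: "?g \<in> borel_measurable MW" by measurable
  have gi: "integrable M (\<lambda>w. ?g (V w))" by (simp add: bint_Y Y1_int)
  have fG: "\<forall>w\<in>space M. fYS Z S1 S0 Y1 Y0 w * of_bool (Z w = True) = ?g (V w) * of_bool (Z w = True)"
    by (auto simp: fYS_def obsY_def obsS_def)
  have aF: "?a \<in> borel_measurable F" by measurable
  have a01: "AE w in M. \<bar>?a w\<bar> \<le> 1"
    using e10 e01[of "(True,False)"] pzT q_pos q0_le_q1 q01 by eventually_elim (auto simp: abs_div_pos divide_le_eq_1)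
  have B: "integrable M (\<lambda>w. \<bar>?a w\<bar> * C (\<lambda>v. \<bar>?g (V v)\<bar>) w)"
    using bound1[OF int_CabsY1S1 _ _ a01] by simp
  note R = EPsiV[OF gm gi P1pos f_meas(1) fG aF B]
  show "integrable M (\<lambda>w. ?a w * psi M X MX Z True (fYS Z S1 S0 Y1 Y0) w)" by (rule R(1))
  have "(\<integral>w. ?a w * psi M X MX Z True (fYS Z S1 S0 Y1 Y0) w \<partial>M) = (\<integral>w. ?a w * C (\<lambda>v. Y1 v * of_bool (S1 v)) w \<partial>M)"
    using R(2) by simp
  also have "\<dots> = (\<integral>w. n1 (True, False) w \<partial>M)"
    by (rule integral_cong_AE) (use key10 pzT in \<open>auto elim: eventually_rev_mp\<close>)
  finally show "(\<integral>w. ?a w * psi M X MX Z True (fYS Z S1 S0 Y1 Y0) w \<partial>M) = (\<integral>w. n1 (True, False) w \<partial>M)" .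
qed

abbreviation "q1 \<equiv> C (\<lambda>v. of_bool (S1 v))"
abbreviation "q0 \<equiv> C (\<lambda>v. of_bool (S0 v))"
abbreviation "mu11 \<equiv> muzs M X MX Z S1 S0 Y1 Y0 True True"
abbreviation "mu00 \<equiv> muzs M X MX Z S1 S0 Y1 Y0 False False"
abbreviation "pzT \<equiv> pz M X MX Z S1 S0 True"
abbreviation "pzF \<equiv> pz M X MX Z S1 S0 False"

lemma int_CY1S1: "integrable M (C (\<lambda>v. Y1 v * of_bool (S1 v)))"
  by (rule cE_int) (auto intro!: bint_Y Y1_int)
lemma int_CY0nS0: "integrable M (C (\<lambda>v. Y0 v * (1 - of_bool (S0 v))))"
  by (rule cE_int) (rule int_Y0nS0)
lemma int_CabsY0nS0: "integrable M (C (\<lambda>v. \<bar>Y0 v * (1 - of_bool (S0 v))\<bar>))"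
  by (rule cE_int) (use int_Y0nS0 in auto)

lemma P2: "integrable M (\<lambda>w. mu11 w * psi M X MX Z False (fS Z S1 S0) w)"
  "(\<integral>w. mu11 w * psi M X MX Z False (fS Z S1 S0) w \<partial>M) = (\<integral>w. mu11 w * q0 w \<partial>M)"
proof -
  let ?g = "\<lambda>p::bool \<times> bool \<times> real \<times> real. of_bool (fst p) :: real"
  have gm: "?g \<in> borel_measurable MW" by measurable
  have gi: "integrable M (\<lambda>w. ?g (V w))" by (simp add: bint)
  have fG: "\<forall>w\<in>space M. fS Z S1 S0 w * of_bool (Z w = False) = ?g (V w) * of_bool (Z w = False)"
    by (auto simp: fS_def obsS_def)
  have aF: "mu11 \<in> borel_measurable F" by measurable
  have bd: "AE w in M. \<bar>mu11 w\<bar> * q0 w \<le> \<bar>C (\<lambda>v. Y1 v * of_bool (S1 v)) w\<bar>"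
    using mu11 q_pos q0_le_q1 q01 
  proof eventually_elim
    case (elim w)
    then have "\<bar>mu11 w\<bar> * q0 w = \<bar>C (\<lambda>v. Y1 v * of_bool (S1 v)) w\<bar> * (q0 w / q1 w)"
      by (simp add: abs_divide)
    also have "\<dots> \<le> \<bar>C (\<lambda>v. Y1 v * of_bool (S1 v)) w\<bar> * 1"
      using elim by (intro mult_left_mono) auto
    finally show ?case by simp
  qed
  have B: "integrable M (\<lambda>w. \<bar>mu11 w\<bar> * C (\<lambda>v. \<bar>?g (V v)\<bar>) w)"
    using bound2[OF int_CY1S1 _ _ _ bd] q01 by simp
  note R = EPsiV[OF gm gi P0pos f_meas(3) fG aF B]
  show "integrable M (\<lambda>w. mu11 w * psi M X MX Z False (fS Z S1 S0) w)" by (rule R(1))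
  show "(\<integral>w. mu11 w * psi M X MX Z False (fS Z S1 S0) w \<partial>M) = (\<integral>w. mu11 w * q0 w \<partial>M)"
    using R(2) by simp
qed

lemma P3: "integrable M (\<lambda>w. (mu11 w * (pzF w / pzT w)) * psi M X MX Z True (fS Z S1 S0) w)"
  "(\<integral>w. (mu11 w * (pzF w / pzT w)) * psi M X MX Z True (fS Z S1 S0) w \<partial>M) = (\<integral>w. mu11 w * q0 w \<partial>M)"
proof -
  let ?g = "\<lambda>p::bool \<times> bool \<times> real \<times> real. of_bool (fst (snd p)) :: real"
  let ?a = "\<lambda>w. mu11 w * (pzF w / pzT w)"
  have gm: "?g \<in> borel_measurable MW" by measurable
  have gi: "integrable M (\<lambda>w. ?g (V w))" by (simp add: bint)
  have fG: "\<forall>w\<in>space M. fS Z S1 S0 w * of_bool (Z w = True) = ?g (V w) * of_bool (Z w = True)"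
    by (auto simp: fS_def obsS_def)
  have aF: "?a \<in> borel_measurable F" by measurable
  have eq: "AE w in M. ?a w * q1 w = mu11 w * q0 w"
    using pzT pzF q_pos by eventually_elim auto
  have bd: "AE w in M. \<bar>?a w\<bar> * q1 w \<le> \<bar>C (\<lambda>v. Y1 v * of_bool (S1 v)) w\<bar>"
    using mu11 q_pos q0_le_q1 q01 eq
  proof eventually_elim
    case (elim w)
    have "\<bar>?a w\<bar> * q1 w = \<bar>?a w * q1 w\<bar>" using elim(2) by (simp add: abs_mult)
    also have "\<dots> = \<bar>mu11 w * q0 w\<bar>" by (simp only: elim(6))
    also have "\<dots> = \<bar>C (\<lambda>v. Y1 v * of_bool (S1 v)) w\<bar> * (q0 w / q1 w)"
      using elim(1,2,5) by (simp add: abs_mult abs_divide)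
    finally have "\<bar>?a w\<bar> * q1 w = \<bar>C (\<lambda>v. Y1 v * of_bool (S1 v)) w\<bar> * (q0 w / q1 w)" .
    also have "\<dots> \<le> \<bar>C (\<lambda>v. Y1 v * of_bool (S1 v)) w\<bar> * 1"
      using elim by (intro mult_left_mono) auto
    finally show ?case by simp
  qed
  have B: "integrable M (\<lambda>w. \<bar>?a w\<bar> * C (\<lambda>v. \<bar>?g (V v)\<bar>) w)"
    using bound2[OF int_CY1S1 _ _ _ bd] q01 by simp
  note R = EPsiV[OF gm gi P1pos f_meas(3) fG aF B]
  show "integrable M (\<lambda>w. ?a w * psi M X MX Z True (fS Z S1 S0) w)" by (rule R(1))
  have "(\<integral>w. ?a w * psi M X MX Z True (fS Z S1 S0) w \<partial>M) = (\<integral>w. ?a w * q1 w \<partial>M)"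
    using R(2) by simp
  also have "\<dots> = (\<integral>w. mu11 w * q0 w \<partial>M)"
    by (rule integral_cong_AE) (use eq in auto)
  finally show "(\<integral>w. ?a w * psi M X MX Z True (fS Z S1 S0) w \<partial>M) = (\<integral>w. mu11 w * q0 w \<partial>M)" .
qed

end


context main_setup begin

lemma P4: "integrable M (\<lambda>w. (eU M X MX S1 S0 (True, False) w / (1 - pzF w)) * psi M X MX Z False (fY1mS Z S1 S0 Y1 Y0) w)"
  "(\<integral>w. (eU M X MX S1 S0 (True, False) w / (1 - pzF w)) * psi M X MX Z False (fY1mS Z S1 S0 Y1 Y0) w \<partial>M)
     = (\<integral>w. n0 (True, False) w \<partial>M)"
proof -
  let ?g = "\<lambda>p::bool \<times> bool \<times> real \<times> real. fst (snd (snd p)) * (1 - of_bool (fst p))"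
  let ?a = "\<lambda>w. eU M X MX S1 S0 (True, False) w / (1 - pzF w)"
  have gm: "?g \<in> borel_measurable MW" by measurable
  have gi: "integrable M (\<lambda>w. ?g (V w))" by (simp add: int_Y0nS0)
  have fG: "\<forall>w\<in>space M. fY1mS Z S1 S0 Y1 Y0 w * of_bool (Z w = False) = ?g (V w) * of_bool (Z w = False)"
    by (auto simp: fY1mS_def obsY_def obsS_def)
  have aF: "?a \<in> borel_measurable F" by measurable
  have a01: "AE w in M. \<bar>?a w\<bar> \<le> 1"
    using e10 e01[of "(True,False)"] pzF q_pos q0_le_q1 q01 by eventually_elim (auto simp: abs_div_pos divide_le_eq_1)
  have B: "integrable M (\<lambda>w. \<bar>?a w\<bar> * C (\<lambda>v. \<bar>?g (V v)\<bar>) w)"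
    using bound1[OF int_CabsY0nS0 _ _ a01] by simp
  note R = EPsiV[OF gm gi P0pos f_meas(2) fG aF B]
  show "integrable M (\<lambda>w. ?a w * psi M X MX Z False (fY1mS Z S1 S0 Y1 Y0) w)" by (rule R(1))
  have "(\<integral>w. ?a w * psi M X MX Z False (fY1mS Z S1 S0 Y1 Y0) w \<partial>M) = (\<integral>w. ?a w * C (\<lambda>v. Y0 v * (1 - of_bool (S0 v))) w \<partial>M)"
    using R(2) by simp
  also have "\<dots> = (\<integral>w. n0 (True, False) w \<partial>M)"
    by (rule integral_cong_AE) (use key0_10 pzF in \<open>auto elim: eventually_rev_mp\<close>)
  finally show "(\<integral>w. ?a w * psi M X MX Z False (fY1mS Z S1 S0 Y1 Y0) w \<partial>M) = (\<integral>w. n0 (True, False) w \<partial>M)" .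
qed

lemma P8: "integrable M (\<lambda>w. (eU M X MX S1 S0 (False, False) w / (1 - pzF w)) * psi M X MX Z False (fY1mS Z S1 S0 Y1 Y0) w)"
  "(\<integral>w. (eU M X MX S1 S0 (False, False) w / (1 - pzF w)) * psi M X MX Z False (fY1mS Z S1 S0 Y1 Y0) w \<partial>M)
     = (\<integral>w. n0 (False, False) w \<partial>M)"
proof -
  let ?g = "\<lambda>p::bool \<times> bool \<times> real \<times> real. fst (snd (snd p)) * (1 - of_bool (fst p))"
  let ?a = "\<lambda>w. eU M X MX S1 S0 (False, False) w / (1 - pzF w)"
  have gm: "?g \<in> borel_measurable MW" by measurable
  have gi: "integrable M (\<lambda>w. ?g (V w))" by (simp add: int_Y0nS0)
  have fG: "\<forall>w\<in>space M. fY1mS Z S1 S0 Y1 Y0 w * of_bool (Z w = False) = ?g (V w) * of_bool (Z w = False)"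
    by (auto simp: fY1mS_def obsY_def obsS_def)
  have aF: "?a \<in> borel_measurable F" by measurable
  have a01: "AE w in M. \<bar>?a w\<bar> \<le> 1"
    using e00 e01[of "(False,False)"] pzF q_pos q0_le_q1 q01 by eventually_elim (auto simp: abs_div_pos divide_le_eq_1)
  have B: "integrable M (\<lambda>w. \<bar>?a w\<bar> * C (\<lambda>v. \<bar>?g (V v)\<bar>) w)"
    using bound1[OF int_CabsY0nS0 _ _ a01] by simp
  note R = EPsiV[OF gm gi P0pos f_meas(2) fG aF B]
  show "integrable M (\<lambda>w. ?a w * psi M X MX Z False (fY1mS Z S1 S0 Y1 Y0) w)" by (rule R(1))
  have "(\<integral>w. ?a w * psi M X MX Z False (fY1mS Z S1 S0 Y1 Y0) w \<partial>M) = (\<integral>w. ?a w * C (\<lambda>v. Y0 v * (1 - of_bool (S0 v))) w \<partial>M)"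
    using R(2) by simp
  also have "\<dots> = (\<integral>w. n0 (False, False) w \<partial>M)"
    by (rule integral_cong_AE) (use key0_00 pzF in \<open>auto elim: eventually_rev_mp\<close>)
  finally show "(\<integral>w. ?a w * psi M X MX Z False (fY1mS Z S1 S0 Y1 Y0) w \<partial>M) = (\<integral>w. n0 (False, False) w \<partial>M)" .
qed

lemma P9: "integrable M (\<lambda>w. (eU M X MX S1 S0 (True, True) w / pzT w) * psi M X MX Z True (fYS Z S1 S0 Y1 Y0) w)"
  "(\<integral>w. (eU M X MX S1 S0 (True, True) w / pzT w) * psi M X MX Z True (fYS Z S1 S0 Y1 Y0) w \<partial>M)
     = (\<integral>w. n1 (True, True) w \<partial>M)"
proof -
  let ?g = "\<lambda>p::bool \<times> bool \<times> real \<times> real. snd (snd (snd p)) * of_bool (fst (snd p))"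
  let ?a = "\<lambda>w. eU M X MX S1 S0 (True, True) w / pzT w"
  have gm: "?g \<in> borel_measurable MW" by measurable
  have gi: "integrable M (\<lambda>w. ?g (V w))" by (simp add: bint_Y Y1_int)
  have fG: "\<forall>w\<in>space M. fYS Z S1 S0 Y1 Y0 w * of_bool (Z w = True) = ?g (V w) * of_bool (Z w = True)"
    by (auto simp: fYS_def obsY_def obsS_def)
  have aF: "?a \<in> borel_measurable F" by measurable
  have a01: "AE w in M. \<bar>?a w\<bar> \<le> 1"
    using e11 e01[of "(True,True)"] pzT q_pos q0_le_q1 q01 by eventually_elim (auto simp: abs_div_pos divide_le_eq_1)
  have B: "integrable M (\<lambda>w. \<bar>?a w\<bar> * C (\<lambda>v. \<bar>?g (V v)\<bar>) w)"
    using bound1[OF int_CabsY1S1 _ _ a01] by simp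
  note R = EPsiV[OF gm gi P1pos f_meas(1) fG aF B]
  show "integrable M (\<lambda>w. ?a w * psi M X MX Z True (fYS Z S1 S0 Y1 Y0) w)" by (rule R(1))
  have "(\<integral>w. ?a w * psi M X MX Z True (fYS Z S1 S0 Y1 Y0) w \<partial>M) = (\<integral>w. ?a w * C (\<lambda>v. Y1 v * of_bool (S1 v)) w \<partial>M)"
    using R(2) by simp
  also have "\<dots> = (\<integral>w. n1 (True, True) w \<partial>M)"
    by (rule integral_cong_AE) (use key11 pzT in \<open>auto elim: eventually_rev_mp\<close>)
  finally show "(\<integral>w. ?a w * psi M X MX Z True (fYS Z S1 S0 Y1 Y0) w \<partial>M) = (\<integral>w. n1 (True, True) w \<partial>M)" .
qed

lemma nS_ge0: "AE w in M. 0 \<le> C (\<lambda>v. 1 - of_bool (S1 v)) w" "AE w in M. 0 \<le> C (\<lambda>v. 1 - of_bool (S0 v)) w"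
  using nS1 nS0 q01 by (auto elim: eventually_rev_mp)

lemma P5: "integrable M (\<lambda>w. mu00 w * psi M X MX Z True (f1mS Z S1 S0) w)"
  "(\<integral>w. mu00 w * psi M X MX Z True (f1mS Z S1 S0) w \<partial>M) = (\<integral>w. mu00 w * C (\<lambda>v. 1 - of_bool (S1 v)) w \<partial>M)"
proof -
  let ?g = "\<lambda>p::bool \<times> bool \<times> real \<times> real. 1 - of_bool (fst (snd p)) :: real"
  have gm: "?g \<in> borel_measurable MW" by measurable
  have gi: "integrable M (\<lambda>w. ?g (V w))" by (simp add: bint)
  have fG: "\<forall>w\<in>space M. f1mS Z S1 S0 w * of_bool (Z w = True) = ?g (V w) * of_bool (Z w = True)"
    by (auto simp: f1mS_def obsS_def)
  have aF: "mu00 \<in> borel_measurable F" by measurable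
  have bd: "AE w in M. \<bar>mu00 w\<bar> * C (\<lambda>v. 1 - of_bool (S1 v)) w \<le> \<bar>C (\<lambda>v. Y0 v * (1 - of_bool (S0 v))) w\<bar>"
    using mu00 q_pos q0_le_q1 q01 nS1
  proof eventually_elim
    case (elim w)
    have p: "0 < 1 - q0 w" using elim by auto
    have "\<bar>mu00 w\<bar> * C (\<lambda>v. 1 - of_bool (S1 v)) w = \<bar>C (\<lambda>v. Y0 v * (1 - of_bool (S0 v))) w\<bar> * ((1 - q1 w) / (1 - q0 w))"
      using elim p by (simp add: abs_divide)
    also have "\<dots> \<le> \<bar>C (\<lambda>v. Y0 v * (1 - of_bool (S0 v))) w\<bar> * 1"
      using elim p by (intro mult_left_mono) auto
    finally show ?case by simp
  qed
  have B: "integrable M (\<lambda>w. \<bar>mu00 w\<bar> * C (\<lambda>v. \<bar>?g (V v)\<bar>) w)"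
    using bound2[OF int_CY0nS0 _ _ nS_ge0(1) bd] by simp
  note R = EPsiV[OF gm gi P1pos f_meas(4) fG aF B]
  show "integrable M (\<lambda>w. mu00 w * psi M X MX Z True (f1mS Z S1 S0) w)" by (rule R(1))
  show "(\<integral>w. mu00 w * psi M X MX Z True (f1mS Z S1 S0) w \<partial>M) = (\<integral>w. mu00 w * C (\<lambda>v. 1 - of_bool (S1 v)) w \<partial>M)"
    using R(2) by simp
qed

lemma P6: "integrable M (\<lambda>w. (mu00 w * ((1 - pzT w) / (1 - pzF w))) * psi M X MX Z False (f1mS Z S1 S0) w)"
  "(\<integral>w. (mu00 w * ((1 - pzT w) / (1 - pzF w))) * psi M X MX Z False (f1mS Z S1 S0) w \<partial>M) = (\<integral>w. mu00 w * C (\<lambda>v. 1 - of_bool (S1 v)) w \<partial>M)"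
proof -
  let ?g = "\<lambda>p::bool \<times> bool \<times> real \<times> real. 1 - of_bool (fst p) :: real"
  let ?a = "\<lambda>w. mu00 w * ((1 - pzT w) / (1 - pzF w))"
  have gm: "?g \<in> borel_measurable MW" by measurable
  have gi: "integrable M (\<lambda>w. ?g (V w))" by (simp add: bint)
  have fG: "\<forall>w\<in>space M. f1mS Z S1 S0 w * of_bool (Z w = False) = ?g (V w) * of_bool (Z w = False)"
    by (auto simp: f1mS_def obsS_def)
  have aF: "?a \<in> borel_measurable F" by measurable
  have eq: "AE w in M. ?a w * C (\<lambda>v. 1 - of_bool (S0 v)) w = mu00 w * C (\<lambda>v. 1 - of_bool (S1 v)) w"
    using pzT pzF q_pos nS1 nS0 by eventually_elim auto
  have bd: "AE w in M. \<bar>?a w\<bar> * C (\<lambda>v. 1 - of_bool (S0 v)) w \<le> \<bar>C (\<lambda>v. Y0 v * (1 - of_bool (S0 v))) w\<bar>"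
    using mu00 q_pos q0_le_q1 q01 nS1 nS0 eq
  proof eventually_elim
    case (elim w)
    have p: "0 < 1 - q0 w" using elim by auto
    have nn: "0 \<le> C (\<lambda>v. 1 - of_bool (S0 v)) w" using elim(7) p by simp
    have "\<bar>?a w\<bar> * C (\<lambda>v. 1 - of_bool (S0 v)) w = \<bar>?a w * C (\<lambda>v. 1 - of_bool (S0 v)) w\<bar>"
      by (simp only: abs_mult abs_of_nonneg[OF nn])
    also have "\<dots> = \<bar>mu00 w * C (\<lambda>v. 1 - of_bool (S1 v)) w\<bar>" by (simp only: elim(8))
    also have "\<dots> = \<bar>C (\<lambda>v. Y0 v * (1 - of_bool (S0 v))) w\<bar> * ((1 - q1 w) / (1 - q0 w))"
      using elim(1,4,6) p by (simp add: abs_mult abs_divide)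
    also have "\<dots> \<le> \<bar>C (\<lambda>v. Y0 v * (1 - of_bool (S0 v))) w\<bar> * 1"
      using elim p by (intro mult_left_mono) auto
    finally show ?case by simp
  qed
  have B: "integrable M (\<lambda>w. \<bar>?a w\<bar> * C (\<lambda>v. \<bar>?g (V v)\<bar>) w)"
    using bound2[OF int_CY0nS0 _ _ nS_ge0(2) bd] by simp
  note R = EPsiV[OF gm gi P0pos f_meas(4) fG aF B]
  show "integrable M (\<lambda>w. ?a w * psi M X MX Z False (f1mS Z S1 S0) w)" by (rule R(1))
  have "(\<integral>w. ?a w * psi M X MX Z False (f1mS Z S1 S0) w \<partial>M) = (\<integral>w. ?a w * C (\<lambda>v. 1 - of_bool (S0 v)) w \<partial>M)"
    using R(2) by simp
  also have "\<dots> = (\<integral>w. mu00 w * C (\<lambda>v. 1 - of_bool (S1 v)) w \<partial>M)"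
    by (rule integral_cong_AE) (use eq in auto)
  finally show "(\<integral>w. ?a w * psi M X MX Z False (f1mS Z S1 S0) w \<partial>M) = (\<integral>w. mu00 w * C (\<lambda>v. 1 - of_bool (S1 v)) w \<partial>M)" .
qed

lemma Pone:
  fixes g :: "bool \<times> bool \<times> real \<times> real \<Rightarrow> real" and f :: "'w \<Rightarrow> real"
  assumes gm[measurable]: "g \<in> borel_measurable MW" and gi: "integrable M (\<lambda>w. g (V w))"
    and Ppos: "AE w in M. PZ M X MX Z z w > 0"
    and fm[measurable]: "f \<in> borel_measurable M"
    and fG: "\<forall>w\<in>space M. f w * of_bool (Z w = z) = g (V w) * of_bool (Z w = z)"
  shows "integrable M (psi M X MX Z z f)" "(\<integral>w. psi M X MX Z z f w \<partial>M) = (\<integral>w. g (V w) \<partial>M)"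
proof -
  have aF: "(\<lambda>w. 1::real) \<in> borel_measurable F" by simp
  have B: "integrable M (\<lambda>w. \<bar>1::real\<bar> * C (\<lambda>v. \<bar>g (V v)\<bar>) w)"
    using cE_int(1)[of "\<lambda>v. \<bar>g (V v)\<bar>"] gi by simp
  note R = EPsiV[OF gm gi Ppos fm fG aF B]
  show "integrable M (psi M X MX Z z f)" using R(1) by simp
  show "(\<integral>w. psi M X MX Z z f w \<partial>M) = (\<integral>w. g (V w) \<partial>M)"
    using R(2) cE_int(2)[OF gi] by simp
qed

lemma P7: "integrable M (psi M X MX Z True (fY1mS Z S1 S0 Y1 Y0))"
  "(\<integral>w. psi M X MX Z True (fY1mS Z S1 S0 Y1 Y0) w \<partial>M) = (\<integral>w. Y1 w * (1 - of_bool (S1 w)) \<partial>M)"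
  using Pone[of "\<lambda>p. snd (snd (snd p)) * (1 - of_bool (fst (snd p)))" True "fY1mS Z S1 S0 Y1 Y0"]
  by (auto simp: int_Y1nS1 P1pos fY1mS_def obsY_def obsS_def)

lemma P10: "integrable M (psi M X MX Z False (fYS Z S1 S0 Y1 Y0))"
  "(\<integral>w. psi M X MX Z False (fYS Z S1 S0 Y1 Y0) w \<partial>M) = (\<integral>w. Y0 w * of_bool (S0 w) \<partial>M)"
  using Pone[of "\<lambda>p. fst (snd (snd p)) * of_bool (fst p)" False "fYS Z S1 S0 Y1 Y0"]
  by (auto simp: bint_Y Y0_int P0pos fYS_def obsY_def obsS_def)

lemma P11: "integrable M (psi M X MX Z True (fS Z S1 S0))"
  "(\<integral>w. psi M X MX Z True (fS Z S1 S0) w \<partial>M) = (\<integral>w. of_bool (S1 w) \<partial>M)"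
  using Pone[of "\<lambda>p. of_bool (fst (snd p))" True "fS Z S1 S0"]
  by (auto simp: bint P1pos fS_def obsS_def)

lemma P12: "integrable M (psi M X MX Z False (fS Z S1 S0))"
  "(\<integral>w. psi M X MX Z False (fS Z S1 S0) w \<partial>M) = (\<integral>w. of_bool (S0 w) \<partial>M)"
  using Pone[of "\<lambda>p. of_bool (fst p)" False "fS Z S1 S0"]
  by (auto simp: bint P0pos fS_def obsS_def)

lemma meas_int: "Measurable.pred M P \<Longrightarrow> measure M {w \<in> space M. P w} = (\<integral>w. of_bool (P w) \<partial>M)"
proof -
  assume [measurable]: "Measurable.pred M P"
  have "(\<integral>w. indicator {w \<in> space M. P w} w \<partial>M) = measure M {w \<in> space M. P w}"
    by (simp add: Int_absorb2 subset_eq)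
  moreover have "(\<integral>w. indicator {w \<in> space M. P w} w \<partial>M) = (\<integral>w. of_bool (P w) \<partial>M)"
    by (rule Bochner_Integration.integral_cong) (auto simp: indicator_def)
  ultimately show ?thesis by (metis (no_types))
qed

lemma n1_int: "(\<integral>w. n1 u w \<partial>M) = (\<integral>w. Y1 w * of_bool ((S1 w, S0 w) = u) \<partial>M)"
  by (rule cE_int(2)) (auto intro!: bint_Y Y1_int)
lemma n0_int: "(\<integral>w. n0 u w \<partial>M) = (\<integral>w. Y0 w * of_bool ((S1 w, S0 w) = u) \<partial>M)"
  by (rule cE_int(2)) (auto intro!: bint_Y Y0_int)

lemma tau_form: "(\<integral>w. Y1 w * of_bool ((S1 w, S0 w) = u) \<partial>M) - (\<integral>w. Y0 w * of_bool ((S1 w, S0 w) = u) \<partial>M)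
   = (\<integral>w. (Y1 w - Y0 w) * of_bool ((S1 w, S0 w) = u) \<partial>M)"
proof -
  have "(\<integral>w. (Y1 w - Y0 w) * of_bool ((S1 w, S0 w) = u) \<partial>M) = (\<integral>w. Y1 w * of_bool ((S1 w, S0 w) = u) - Y0 w * of_bool ((S1 w, S0 w) = u) \<partial>M)"
    by (simp add: left_diff_distrib)
  also have "\<dots> = (\<integral>w. Y1 w * of_bool ((S1 w, S0 w) = u) \<partial>M) - (\<integral>w. Y0 w * of_bool ((S1 w, S0 w) = u) \<partial>M)"
    by (rule Bochner_Integration.integral_diff) (auto intro!: bint_Y Y1_int Y0_int)
  finally show ?thesis by simp
qed

lemma phi110: "(\<integral>w. phi_1_10 M X MX Z S1 S0 Y1 Y0 w \<partial>M) = (\<integral>w. n1 (True, False) w \<partial>M)"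
proof -
  have "(\<integral>w. phi_1_10 M X MX Z S1 S0 Y1 Y0 w \<partial>M) =
     (\<integral>w. (eU M X MX S1 S0 (True, False) w / pzT w) * psi M X MX Z True (fYS Z S1 S0 Y1 Y0) w
        - mu11 w * psi M X MX Z False (fS Z S1 S0) w
        + (mu11 w * (pzF w / pzT w)) * psi M X MX Z True (fS Z S1 S0) w \<partial>M)"
    by (rule Bochner_Integration.integral_cong) (auto simp: phi_1_10_def algebra_simps)
  also have "\<dots> = (\<integral>w. n1 (True, False) w \<partial>M)"
    using P1 P2 P3 by simp
  finally show ?thesis .
qed

lemma phi010: "(\<integral>w. phi_0_10 M X MX Z S1 S0 Y1 Y0 w \<partial>M) = (\<integral>w. n0 (True, False) w \<partial>M)"
proof -
  have "(\<integral>w. phi_0_10 M X MX Z S1 S0 Y1 Y0 w \<partial>M) =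
     (\<integral>w. (eU M X MX S1 S0 (True, False) w / (1 - pzF w)) * psi M X MX Z False (fY1mS Z S1 S0 Y1 Y0) w
        - mu00 w * psi M X MX Z True (f1mS Z S1 S0) w
        + (mu00 w * ((1 - pzT w) / (1 - pzF w))) * psi M X MX Z False (f1mS Z S1 S0) w \<partial>M)"
    by (rule Bochner_Integration.integral_cong) (auto simp: phi_0_10_def algebra_simps)
  also have "\<dots> = (\<integral>w. n0 (True, False) w \<partial>M)"
    using P4 P5 P6 by simp
  finally show ?thesis .
qed

lemma phi000: "(\<integral>w. phi_0_00 M X MX Z S1 S0 Y1 Y0 w \<partial>M) = (\<integral>w. n0 (False, False) w \<partial>M)"
proof -
  have "(\<integral>w. phi_0_00 M X MX Z S1 S0 Y1 Y0 w \<partial>M) =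
     (\<integral>w. (eU M X MX S1 S0 (False, False) w / (1 - pzF w)) * psi M X MX Z False (fY1mS Z S1 S0 Y1 Y0) w
        + mu00 w * psi M X MX Z True (f1mS Z S1 S0) w
        - (mu00 w * ((1 - pzT w) / (1 - pzF w))) * psi M X MX Z False (f1mS Z S1 S0) w \<partial>M)"
    by (rule Bochner_Integration.integral_cong) (auto simp: phi_0_00_def algebra_simps)
  also have "\<dots> = (\<integral>w. n0 (False, False) w \<partial>M)"
    using P8 P5 P6 by simp
  finally show ?thesis .
qed

lemma phi111: "(\<integral>w. phi_1_11 M X MX Z S1 S0 Y1 Y0 w \<partial>M) = (\<integral>w. n1 (True, True) w \<partial>M)"
proof -
  have "(\<integral>w. phi_1_11 M X MX Z S1 S0 Y1 Y0 w \<partial>M) =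
     (\<integral>w. (eU M X MX S1 S0 (True, True) w / pzT w) * psi M X MX Z True (fYS Z S1 S0 Y1 Y0) w
        + mu11 w * psi M X MX Z False (fS Z S1 S0) w
        - (mu11 w * (pzF w / pzT w)) * psi M X MX Z True (fS Z S1 S0) w \<partial>M)"
    by (rule Bochner_Integration.integral_cong) (auto simp: phi_1_11_def algebra_simps)
  also have "\<dots> = (\<integral>w. n1 (True, True) w \<partial>M)"
    using P9 P2 P3 by simp
  finally show ?thesis .
qed

lemma phi100: "(\<integral>w. phi_1_00 M X MX Z S1 S0 Y1 Y0 w \<partial>M) = (\<integral>w. Y1 w * of_bool ((S1 w, S0 w) = (False, False)) \<partial>M)"
proof -
  have "(\<integral>w. phi_1_00 M X MX Z S1 S0 Y1 Y0 w \<partial>M) = (\<integral>w. Y1 w * (1 - of_bool (S1 w)) \<partial>M)"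
    using P7 by (simp add: phi_1_00_def)
  also have "\<dots> = (\<integral>w. Y1 w * of_bool ((S1 w, S0 w) = (False, False)) \<partial>M)"
    by (rule Bochner_Integration.integral_cong) (use A2 in auto)
  finally show ?thesis .
qed

lemma phi011: "(\<integral>w. phi_0_11 M X MX Z S1 S0 Y1 Y0 w \<partial>M) = (\<integral>w. Y0 w * of_bool ((S1 w, S0 w) = (True, True)) \<partial>M)"
proof -
  have "(\<integral>w. phi_0_11 M X MX Z S1 S0 Y1 Y0 w \<partial>M) = (\<integral>w. Y0 w * of_bool (S0 w) \<partial>M)"
    using P10 by (simp add: phi_0_11_def)
  also have "\<dots> = (\<integral>w. Y0 w * of_bool ((S1 w, S0 w) = (True, True)) \<partial>M)"
    by (rule Bochner_Integration.integral_cong) (use A2 in auto)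
  finally show ?thesis .
qed

lemma main_result:
  assumes int_phi: "integrable M (phi_1_10 M X MX Z S1 S0 Y1 Y0)" "integrable M (phi_0_10 M X MX Z S1 S0 Y1 Y0)"
      "integrable M (phi_1_00 M X MX Z S1 S0 Y1 Y0)" "integrable M (phi_0_00 M X MX Z S1 S0 Y1 Y0)"
      "integrable M (phi_1_11 M X MX Z S1 S0 Y1 Y0)" "integrable M (phi_0_11 M X MX Z S1 S0 Y1 Y0)"
  shows "tau M S1 S0 Y1 Y0 (True, False) =
           (\<integral>w. phi_1_10 M X MX Z S1 S0 Y1 Y0 w - phi_0_10 M X MX Z S1 S0 Y1 Y0 w \<partial>M)
         / (\<integral>w. psi M X MX Z True (fS Z S1 S0) w - psi M X MX Z False (fS Z S1 S0) w \<partial>M)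
    \<and> tau M S1 S0 Y1 Y0 (False, False) =
           (\<integral>w. phi_1_00 M X MX Z S1 S0 Y1 Y0 w - phi_0_00 M X MX Z S1 S0 Y1 Y0 w \<partial>M)
         / (\<integral>w. 1 - psi M X MX Z True (fS Z S1 S0) w \<partial>M)
    \<and> tau M S1 S0 Y1 Y0 (True, True) =
           (\<integral>w. phi_1_11 M X MX Z S1 S0 Y1 Y0 w - phi_0_11 M X MX Z S1 S0 Y1 Y0 w \<partial>M)
         / (\<integral>w. psi M X MX Z False (fS Z S1 S0) w \<partial>M)"
proof (intro conjI)
  have d10: "(\<integral>w. psi M X MX Z True (fS Z S1 S0) w - psi M X MX Z False (fS Z S1 S0) w \<partial>M)
      = measure M {w \<in> space M. (S1 w, S0 w) = (True, False)}"
  proof -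
    have "(\<integral>w. psi M X MX Z True (fS Z S1 S0) w - psi M X MX Z False (fS Z S1 S0) w \<partial>M)
        = (\<integral>w. of_bool (S1 w) \<partial>M) - (\<integral>w. of_bool (S0 w) \<partial>M)"
      using P11 P12 by simp
    also have "\<dots> = (\<integral>w. of_bool (S1 w) - of_bool (S0 w) \<partial>M)"
      by (rule Bochner_Integration.integral_diff[symmetric]) (auto intro!: bint)
    also have "\<dots> = (\<integral>w. of_bool ((S1 w, S0 w) = (True, False)) \<partial>M)"
      by (rule Bochner_Integration.integral_cong) (use A2 in auto)
    also have "\<dots> = measure M {w \<in> space M. (S1 w, S0 w) = (True, False)}"
      by (rule meas_int[symmetric]) simp
    finally show ?thesis .
  qed
  show "tau M S1 S0 Y1 Y0 (True, False) =
           (\<integral>w. phi_1_10 M X MX Z S1 S0 Y1 Y0 w - phi_0_10 M X MX Z S1 S0 Y1 Y0 w \<partial>M)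
         / (\<integral>w. psi M X MX Z True (fS Z S1 S0) w - psi M X MX Z False (fS Z S1 S0) w \<partial>M)"
  proof -
    have num: "(\<integral>w. phi_1_10 M X MX Z S1 S0 Y1 Y0 w - phi_0_10 M X MX Z S1 S0 Y1 Y0 w \<partial>M)
        = (\<integral>w. (Y1 w - Y0 w) * of_bool ((S1 w, S0 w) = (True, False)) \<partial>M)"
      by (simp only: Bochner_Integration.integral_diff[OF int_phi(1,2)] phi110 phi010 n1_int n0_int tau_form)
    show ?thesis unfolding tau_def d10 num ..
  qed
  have d00: "(\<integral>w. 1 - psi M X MX Z True (fS Z S1 S0) w \<partial>M) = measure M {w \<in> space M. (S1 w, S0 w) = (False, False)}"
  proof -
    have "(\<integral>w. 1 - psi M X MX Z True (fS Z S1 S0) w \<partial>M) = 1 - (\<integral>w. of_bool (S1 w) \<partial>M)"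
      using P11 by (simp add: prob_space)
    also have "\<dots> = (\<integral>w. 1 - of_bool (S1 w) \<partial>M)"
      by (subst Bochner_Integration.integral_diff) (auto intro!: bint simp: prob_space)
    also have "\<dots> = (\<integral>w. of_bool ((S1 w, S0 w) = (False, False)) \<partial>M)"
      by (rule Bochner_Integration.integral_cong) (use A2 in auto)
    also have "\<dots> = measure M {w \<in> space M. (S1 w, S0 w) = (False, False)}"
      by (rule meas_int[symmetric]) simp
    finally show ?thesis .
  qed
  show "tau M S1 S0 Y1 Y0 (False, False) =
           (\<integral>w. phi_1_00 M X MX Z S1 S0 Y1 Y0 w - phi_0_00 M X MX Z S1 S0 Y1 Y0 w \<partial>M)
         / (\<integral>w. 1 - psi M X MX Z True (fS Z S1 S0) w \<partial>M)"
  proof -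
    have num: "(\<integral>w. phi_1_00 M X MX Z S1 S0 Y1 Y0 w - phi_0_00 M X MX Z S1 S0 Y1 Y0 w \<partial>M)
        = (\<integral>w. (Y1 w - Y0 w) * of_bool ((S1 w, S0 w) = (False, False)) \<partial>M)"
      by (simp only: Bochner_Integration.integral_diff[OF int_phi(3,4)] phi100 phi000 n0_int tau_form)
    show ?thesis unfolding tau_def d00 num ..
  qed
  have d11: "(\<integral>w. psi M X MX Z False (fS Z S1 S0) w \<partial>M) = measure M {w \<in> space M. (S1 w, S0 w) = (True, True)}"
  proof -
    have "(\<integral>w. psi M X MX Z False (fS Z S1 S0) w \<partial>M) = (\<integral>w. of_bool (S0 w) \<partial>M)"
      using P12 by simp
    also have "\<dots> = (\<integral>w. of_bool ((S1 w, S0 w) = (True, True)) \<partial>M)"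
      by (rule Bochner_Integration.integral_cong) (use A2 in auto)
    also have "\<dots> = measure M {w \<in> space M. (S1 w, S0 w) = (True, True)}"
      by (rule meas_int[symmetric]) simp
    finally show ?thesis .
  qed
  show "tau M S1 S0 Y1 Y0 (True, True) =
           (\<integral>w. phi_1_11 M X MX Z S1 S0 Y1 Y0 w - phi_0_11 M X MX Z S1 S0 Y1 Y0 w \<partial>M)
         / (\<integral>w. psi M X MX Z False (fS Z S1 S0) w \<partial>M)"
  proof -
    have num: "(\<integral>w. phi_1_11 M X MX Z S1 S0 Y1 Y0 w - phi_0_11 M X MX Z S1 S0 Y1 Y0 w \<partial>M)
        = (\<integral>w. (Y1 w - Y0 w) * of_bool ((S1 w, S0 w) = (True, True)) \<partial>M)"
      by (simp only: Bochner_Integration.integral_diff[OF int_phi(5,6)] phi111 phi011 n1_int tau_form)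
    show ?thesis unfolding tau_def d11 num ..
  qed
qed

end

theorem corollary1:
  fixes M :: "'w measure" and X :: "'w \<Rightarrow> 'x" and MX :: "'x measure"
    and Z S1 S0 :: "'w \<Rightarrow> bool" and Y1 Y0 :: "'w \<Rightarrow> real"
  assumes prob: "prob_space M"
    and X_meas: "X \<in> M \<rightarrow>\<^sub>M MX"
    and Z_meas: "Z \<in> M \<rightarrow>\<^sub>M count_space UNIV"
    and S1_meas: "S1 \<in> M \<rightarrow>\<^sub>M count_space UNIV"
    and S0_meas: "S0 \<in> M \<rightarrow>\<^sub>M count_space UNIV"
    and Y1_int: "integrable M Y1"
    and Y0_int: "integrable M Y0"
    and A1: "cond_indep M X MX Z (\<lambda>w. (S0 w, S1 w, Y0 w, Y1 w))
               (count_space UNIV \<Otimes>\<^sub>M (count_space UNIV \<Otimes>\<^sub>M (borel \<Otimes>\<^sub>M borel)))"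
    and A2: "\<forall>w\<in>space M. S0 w \<longrightarrow> S1 w"
    and A3_1: "AE w in M. eU M X MX S1 S0 (True, True) w > 0 \<and> eU M X MX S1 S0 (True, False) w > 0 \<longrightarrow>
                 cEev M X MX (\<lambda>v. (S1 v, S0 v) = (True, True)) Y1 w
               = cEev M X MX (\<lambda>v. (S1 v, S0 v) = (True, False)) Y1 w"
    and A3_0: "AE w in M. eU M X MX S1 S0 (False, False) w > 0 \<and> eU M X MX S1 S0 (True, False) w > 0 \<longrightarrow>
                 cEev M X MX (\<lambda>v. (S1 v, S0 v) = (False, False)) Y0 w
               = cEev M X MX (\<lambda>v. (S1 v, S0 v) = (True, False)) Y0 w"
    and overlap: "AE w in M. 0 < PZ M X MX Z True w \<and> PZ M X MX Z True w < 1"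
    and pos_p: "AE w in M. 0 < pz M X MX Z S1 S0 True w \<and> pz M X MX Z S1 S0 False w < 1"
    and int_phi: "integrable M (phi_1_10 M X MX Z S1 S0 Y1 Y0)" "integrable M (phi_0_10 M X MX Z S1 S0 Y1 Y0)"
      "integrable M (phi_1_00 M X MX Z S1 S0 Y1 Y0)" "integrable M (phi_0_00 M X MX Z S1 S0 Y1 Y0)"
      "integrable M (phi_1_11 M X MX Z S1 S0 Y1 Y0)" "integrable M (phi_0_11 M X MX Z S1 S0 Y1 Y0)"
  shows "tau M S1 S0 Y1 Y0 (True, False) =
           (\<integral>w. phi_1_10 M X MX Z S1 S0 Y1 Y0 w - phi_0_10 M X MX Z S1 S0 Y1 Y0 w \<partial>M)
         / (\<integral>w. psi M X MX Z True (fS Z S1 S0) w - psi M X MX Z False (fS Z S1 S0) w \<partial>M)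
    \<and> tau M S1 S0 Y1 Y0 (False, False) =
           (\<integral>w. phi_1_00 M X MX Z S1 S0 Y1 Y0 w - phi_0_00 M X MX Z S1 S0 Y1 Y0 w \<partial>M)
         / (\<integral>w. 1 - psi M X MX Z True (fS Z S1 S0) w \<partial>M)
    \<and> tau M S1 S0 Y1 Y0 (True, True) =
           (\<integral>w. phi_1_11 M X MX Z S1 S0 Y1 Y0 w - phi_0_11 M X MX Z S1 S0 Y1 Y0 w \<partial>M)
         / (\<integral>w. psi M X MX Z False (fS Z S1 S0) w \<partial>M)"
  proof -
  interpret main_setup M X MX Z S1 S0 Y1 Y0
  proof (rule main_setup.intro)
    show "ce_setup M X MX" by (rule ce_setup.intro[OF prob X_meas])
    show "main_setup_axioms M X MX Z S1 S0 Y1 Y0"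
      by (rule main_setup_axioms.intro[OF Z_meas S1_meas S0_meas Y1_int Y0_int A1 A2 A3_1 A3_0 overlap pos_p])
  qed
  show ?thesis by (rule main_result[OF int_phi])
qed

end
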